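(* Fix $p\ge1$ and assume one of the following: (1) $(X_{it})$ is an iid field of regularly varying random variables with index $\alpha\in(0,4)$, and $\mathbb E[X]=0$ if $\mathbb E|X|<\infty$; (2) $(X_{it})$ is the stochastic volatility model $X_{it}=\sigma_{it}Z_{it}$ satisfying the hypotheses (1)–(3) below, and $\mathbb E[Z]=0$ if $\mathbb E|Z|<\infty$: (i) $Z$ is regularly varying with index $\alpha\in(0,4)\setminus\{2\}$; (ii) $((\sigma_{1t},\dots,\sigma_{pt}))_{t\ge1}$ is strongly mixing with rate $(\alpha_h)$, $\sum_h\alpha_h^{\delta/(2+\delta)}<\infty$ for some $\delta>0$; (iii) $\mathbb E[\sigma^{2\max(2+\delta,\alpha+\epsilon)}]<\infty$ for some $\epsilon>0$. Then $$a_n^{-2}\big\|\mathbf X^n(\mathbf X^n)'-\operatorname{diag}(\mathbf X^n(\mathbf X^n)')\big\|_2\xrightarrow{\mathbb P}0,$$ where $\|\cdot\|_2$ is the spectral norm, $\operatorname{diag}(\mathbf A)$ is the diagonal matrix with the diagonal of $\mathbf A$, and $(a_n)$ satisfies $n\,\mathbb P(|X|>a_n)\to1$.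
   Context: Stochastic volatility model: $X_{it}=\sigma_{it}Z_{it}$, with $(Z_{it})$ an iid field independent of a strictly stationary ergodic field $(\sigma_{it})$ of non-negative random variables; $Z,\sigma,X$ generic elements. A real random variable $W$ is regularly varying with index $\alpha$ if $\mathbb P(W>x)\sim p_+L(x)x^{-\alpha}$, $\mathbb P(W<-x)\sim p_-L(x)x^{-\alpha}$, $p_++p_-=1$, $L$ slowly varying. $\mathbf X^n=(X_{it})_{1\le i\le p,\,1\le t\le n}\in\mathbb R^{p\times n}$, so $\mathbf X^n(\mathbf X^n)'=(S_{ij})$ with $S_{ij}=\sum_{t=1}^nX_{it}X_{jt}$. *)

theory Defs
  imports "HOL-Probability.Probability"
begin

definition slowly_varying :: "(real \<Rightarrow> real) \<Rightarrow> bool" where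
  "slowly_varying L \<longleftrightarrow>
     L \<in> borel_measurable borel \<and>
     eventually (\<lambda>x. L x > 0) at_top \<and>
     (\<forall>c>0. ((\<lambda>x. L (c * x) / L x) \<longlongrightarrow> 1) at_top)"

definition regularly_varying :: "'a measure \<Rightarrow> ('a \<Rightarrow> real) \<Rightarrow> real \<Rightarrow> bool" where
  "regularly_varying M W \<alpha> \<longleftrightarrow>
     W \<in> borel_measurable M \<and>
     (\<exists>L pp pm. slowly_varying L \<and> pp \<ge> 0 \<and> pm \<ge> 0 \<and> pp + pm = 1 \<and>
       ((\<lambda>x. measure M {\<omega> \<in> space M. W \<omega> > x} / (L x * x powr (-\<alpha>))) \<longlongrightarrow> pp) at_top \<and>
       ((\<lambda>x. measure M {\<omega> \<in> space M. W \<omega> < - x} / (L x * x powr (-\<alpha>))) \<longlongrightarrow> pm) at_top)"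

definition pos_idx :: "(nat \<times> nat) set" where
  "pos_idx = {(i, t). i \<ge> 1 \<and> t \<ge> 1}"

definition iid_field :: "'a measure \<Rightarrow> (nat \<Rightarrow> nat \<Rightarrow> 'a \<Rightarrow> real) \<Rightarrow> bool" where
  "iid_field M Y \<longleftrightarrow>
     prob_space.indep_vars M (\<lambda>_. borel) (\<lambda>(i, t). Y i t) pos_idx \<and>
     (\<forall>(i, t) \<in> pos_idx. distr M borel (Y i t) = distr M borel (Y 1 1))"

definition field_law :: "'a measure \<Rightarrow> (nat \<Rightarrow> nat \<Rightarrow> 'a \<Rightarrow> real) \<Rightarrow> (nat \<times> nat \<Rightarrow> real) measure" where
  "field_law M Y = distr M (Pi\<^sub>M UNIV (\<lambda>_. borel)) (\<lambda>\<omega> (i, t). Y (Suc i) (Suc t) \<omega>)"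

definition field_shift :: "nat \<Rightarrow> nat \<Rightarrow> (nat \<times> nat \<Rightarrow> real) \<Rightarrow> (nat \<times> nat \<Rightarrow> real)" where
  "field_shift a b f = (\<lambda>(i, t). f (i + a, t + b))"

definition strictly_stationary_field :: "'a measure \<Rightarrow> (nat \<Rightarrow> nat \<Rightarrow> 'a \<Rightarrow> real) \<Rightarrow> bool" where
  "strictly_stationary_field M Y \<longleftrightarrow>
     (\<forall>i t. i \<ge> 1 \<longrightarrow> t \<ge> 1 \<longrightarrow> Y i t \<in> borel_measurable M) \<and>
     (\<forall>a b. distr (field_law M Y) (Pi\<^sub>M UNIV (\<lambda>_. borel)) (field_shift a b) = field_law M Y)"

definition ergodic_field :: "'a measure \<Rightarrow> (nat \<Rightarrow> nat \<Rightarrow> 'a \<Rightarrow> real) \<Rightarrow> bool" where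
  "ergodic_field M Y \<longleftrightarrow>
     (\<forall>B \<in> sets (Pi\<^sub>M UNIV (\<lambda>_. borel)).
        (\<forall>a b. field_shift a b -` B \<inter> space (Pi\<^sub>M UNIV (\<lambda>(_::nat\<times>nat). (borel::real measure))) = B) \<longrightarrow>
        measure (field_law M Y) B = 0 \<or> measure (field_law M Y) B = 1)"

definition generated_event ::
  "'a measure \<Rightarrow> (nat \<Rightarrow> nat \<Rightarrow> 'a \<Rightarrow> real) \<Rightarrow> nat \<Rightarrow> nat set \<Rightarrow> 'a set \<Rightarrow> bool" where
  "generated_event M Y p T A \<longleftrightarrow>
     (\<exists>C \<in> sets (Pi\<^sub>M ({1..p} \<times> T) (\<lambda>_. borel)).
        A = {\<omega> \<in> space M. (\<lambda>j\<in>{1..p} \<times> T. Y (fst j) (snd j) \<omega>) \<in> C})"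

definition strongly_mixing_rate ::
  "'a measure \<Rightarrow> (nat \<Rightarrow> nat \<Rightarrow> 'a \<Rightarrow> real) \<Rightarrow> nat \<Rightarrow> (nat \<Rightarrow> real) \<Rightarrow> bool" where
  "strongly_mixing_rate M Y p \<alpha>h \<longleftrightarrow>
     (\<alpha>h \<longlonglongrightarrow> 0) \<and> (\<forall>h. \<alpha>h h \<ge> 0) \<and>
     (\<forall>k h A B. k \<ge> 1 \<longrightarrow> h \<ge> 1 \<longrightarrow>
        generated_event M Y p {1..k} A \<longrightarrow> generated_event M Y p {k + h..} B \<longrightarrow>
        \<bar>measure M (A \<inter> B) - measure M A * measure M B\<bar> \<le> \<alpha>h h)"

definition spectral_norm :: "nat \<Rightarrow> (nat \<Rightarrow> nat \<Rightarrow> real) \<Rightarrow> real" where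
  "spectral_norm p A = Sup {sqrt (\<Sum>i=1..p. (\<Sum>j=1..p. A i j * x j)\<^sup>2) | x. (\<Sum>j=1..p. (x j)\<^sup>2) = 1}"

text \<open>Convergence in probability to 0 (stated with outer probability, so no measurability of Y n
  is presupposed; for measurable Y n it is the usual notion).\<close>
definition tendsto_in_prob_zero :: "'a measure \<Rightarrow> (nat \<Rightarrow> 'a \<Rightarrow> real) \<Rightarrow> bool" where
  "tendsto_in_prob_zero M Y \<longleftrightarrow>
     (\<forall>\<epsilon>>0. \<forall>\<eta>>0. eventually (\<lambda>n. \<exists>A \<in> sets M.
         {\<omega> \<in> space M. \<bar>Y n \<omega>\<bar> > \<epsilon>} \<subseteq> A \<and> measure M A < \<eta>) sequentially)"

definition iid_model :: "'a measure \<Rightarrow> (nat \<Rightarrow> nat \<Rightarrow> 'a \<Rightarrow> real) \<Rightarrow> bool" where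
  "iid_model M X \<longleftrightarrow>
     iid_field M X \<and>
     (\<exists>\<alpha>. 0 < \<alpha> \<and> \<alpha> < 4 \<and> regularly_varying M (X 1 1) \<alpha>) \<and>
     (integrable M (X 1 1) \<longrightarrow> integral\<^sup>L M (X 1 1) = 0)"

definition sv_model :: "'a measure \<Rightarrow> nat \<Rightarrow> (nat \<Rightarrow> nat \<Rightarrow> 'a \<Rightarrow> real) \<Rightarrow> bool" where
  "sv_model M p X \<longleftrightarrow>
     (\<exists>\<sigma> Z. (\<forall>i t \<omega>. X i t \<omega> = \<sigma> i t \<omega> * Z i t \<omega>) \<and>
        iid_field M Z \<and>
        strictly_stationary_field M \<sigma> \<and> ergodic_field M \<sigma> \<and>
        (\<forall>i t. i \<ge> 1 \<longrightarrow> t \<ge> 1 \<longrightarrow> (\<forall>\<omega>\<in>space M. \<sigma> i t \<omega> \<ge> 0)) \<and>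
        prob_space.indep_var M
          (Pi\<^sub>M UNIV (\<lambda>_. borel)) (\<lambda>\<omega> (i, t). Z (Suc i) (Suc t) \<omega>)
          (Pi\<^sub>M UNIV (\<lambda>_. borel)) (\<lambda>\<omega> (i, t). \<sigma> (Suc i) (Suc t) \<omega>) \<and>
        (integrable M (Z 1 1) \<longrightarrow> integral\<^sup>L M (Z 1 1) = 0) \<and>
        (\<exists>\<alpha>. 0 < \<alpha> \<and> \<alpha> < 4 \<and> \<alpha> \<noteq> 2 \<and> regularly_varying M (Z 1 1) \<alpha> \<and>
          (\<exists>\<delta> > 0. (\<exists>\<alpha>h. strongly_mixing_rate M \<sigma> p \<alpha>h \<and>
                          summable (\<lambda>h. \<alpha>h (Suc h) powr (\<delta> / (2 + \<delta>)))) \<and>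
             (\<exists>\<epsilon> > 0. integrable M (\<lambda>\<omega>. \<sigma> 1 1 \<omega> powr (2 * max (2 + \<delta>) (\<alpha> + \<epsilon>)))))))"

end

theory Submission
  imports Defs
begin

lemma tail_ratio:
  assumes P: "prob_space M" and rv: "regularly_varying M W \<alpha>"
  defines "F \<equiv> \<lambda>x. measure M {\<omega> \<in> space M. \<bar>W \<omega>\<bar> > x}"
  shows "((\<lambda>x. F (2*x) / F x) \<longlongrightarrow> 2 powr (-\<alpha>)) at_top"
    and "eventually (\<lambda>x. F x > 0) at_top"
proof -
  interpret prob_space M by (rule P)
  have Wm[measurable]: "W \<in> borel_measurable M" using rv unfolding regularly_varying_def by auto
  obtain L pp pm where sv: "slowly_varying L" and pp: "pp \<ge> 0" "pm \<ge> 0" "pp + pm = 1"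
    and lp: "((\<lambda>x. measure M {\<omega> \<in> space M. W \<omega> > x} / (L x * x powr (-\<alpha>))) \<longlongrightarrow> pp) at_top"
    and lm: "((\<lambda>x. measure M {\<omega> \<in> space M. W \<omega> < - x} / (L x * x powr (-\<alpha>))) \<longlongrightarrow> pm) at_top"
    using rv unfolding regularly_varying_def by blast
  define h where "h x = L x * x powr (-\<alpha>)" for x
  have Fsplit: "F x = measure M {\<omega> \<in> space M. W \<omega> > x} + measure M {\<omega> \<in> space M. W \<omega> < - x}"
    if "x \<ge> 0" for x
  proof -
    have "{\<omega> \<in> space M. \<bar>W \<omega>\<bar> > x} = {\<omega> \<in> space M. W \<omega> > x} \<union> {\<omega> \<in> space M. W \<omega> < - x}"
      using that by auto
    moreover have "{\<omega> \<in> space M. W \<omega> > x} \<inter> {\<omega> \<in> space M. W \<omega> < - x} = {}" using that by auto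
    ultimately show ?thesis unfolding F_def by (simp add: finite_measure_Union)
  qed
  have Fh: "((\<lambda>x. F x / h x) \<longlongrightarrow> 1) at_top"
  proof -
    have "((\<lambda>x. measure M {\<omega> \<in> space M. W \<omega> > x} / h x + measure M {\<omega> \<in> space M. W \<omega> < - x} / h x) \<longlongrightarrow> pp + pm) at_top"
      using lp lm unfolding h_def by (intro tendsto_add)
    then have "((\<lambda>x. measure M {\<omega> \<in> space M. W \<omega> > x} / h x + measure M {\<omega> \<in> space M. W \<omega> < - x} / h x) \<longlongrightarrow> 1) at_top"
      using pp by simp
    moreover have "eventually (\<lambda>x. measure M {\<omega> \<in> space M. W \<omega> > x} / h x + measure M {\<omega> \<in> space M. W \<omega> < - x} / h x = F x / h x) at_top"
      using eventually_ge_at_top[of 0] by eventually_elim (simp add: Fsplit add_divide_distrib)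
    ultimately show ?thesis by (rule Lim_transform_eventually)
  qed
  have lim2: "filterlim (\<lambda>x::real. 2*x) at_top at_top" by real_asymp
  have Fh2: "((\<lambda>x. F (2*x) / h (2*x)) \<longlongrightarrow> 1) at_top"
    using filterlim_compose[OF Fh lim2] by simp
  have L2: "((\<lambda>x. L (2 * x) / L x) \<longlongrightarrow> 1) at_top"
    using sv unfolding slowly_varying_def by auto
  have Lpos: "eventually (\<lambda>x. L x > 0) at_top" using sv unfolding slowly_varying_def by auto
  have Lpos2: "eventually (\<lambda>x. L (2*x) > 0) at_top"
    using filterlim_iff[THEN iffD1, OF lim2, rule_format, OF Lpos] by simp
  have Fhpos: "eventually (\<lambda>x. F x / h x > 1/2) at_top"
    using Fh by (rule order_tendstoD) simp
  have ev: "eventually (\<lambda>x. x > 0 \<and> L x > 0 \<and> L (2*x) > 0 \<and> F x / h x > 1/2) at_top"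
    using Lpos Lpos2 Fhpos eventually_gt_at_top[of 0] by eventually_elim auto
  show "eventually (\<lambda>x. F x > 0) at_top"
    using ev
  proof eventually_elim
    case (elim x)
    then have "h x > 0" unfolding h_def by auto
    with elim show ?case by (simp add: field_simps)
  qed
  have lim: "((\<lambda>x. (F (2*x) / h (2*x)) * (L (2*x) / L x) * 2 powr (-\<alpha>) / (F x / h x)) \<longlongrightarrow> 1 * 1 * 2 powr (-\<alpha>) / 1) at_top"
    by (intro tendsto_intros Fh2 L2 Fh) auto
  have ev2: "\<forall>\<^sub>F x in at_top. F (2 * x) / h (2 * x) * (L (2 * x) / L x) * 2 powr - \<alpha> / (F x / h x) = F (2 * x) / F x"
      using ev
    proof eventually_elim
      case (elim x)
      have hx: "h x > 0" using elim unfolding h_def by auto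
      have h2: "h (2*x) = L (2*x) * 2 powr (-\<alpha>) * x powr (-\<alpha>)"
        unfolding h_def using elim by (simp add: powr_mult)
      have "F x > 0" using elim hx by (simp add: field_simps)
      then show ?case using elim hx unfolding h2 unfolding h_def by (simp add: field_simps)
    qed
  show "((\<lambda>x. F (2*x) / F x) \<longlongrightarrow> 2 powr (-\<alpha>)) at_top"
    using Lim_transform_eventually[OF lim ev2] by simp
qed



lemma tail_bounds:
  assumes P: "prob_space M" and rv: "regularly_varying M W \<alpha>"
  defines "F \<equiv> \<lambda>x. measure M {\<omega> \<in> space M. \<bar>W \<omega>\<bar> > x}"
  shows tail_lower: "\<beta> > \<alpha> \<Longrightarrow> \<beta> > 0 \<Longrightarrow> \<exists>c>0. \<exists>x0>0. \<forall>x\<ge>x0. F x \<ge> c * x powr (-\<beta>)"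
    and tail_upper: "\<gamma> < \<alpha> \<Longrightarrow> \<gamma> > 0 \<Longrightarrow> \<exists>C\<ge>0. \<exists>x0>0. \<forall>x\<ge>x0. F x \<le> C * x powr (-\<gamma>)"
proof -
  interpret prob_space M by (rule P)
  have Wm[measurable]: "W \<in> borel_measurable M" using rv unfolding regularly_varying_def by auto
  have mono: "F y \<le> F x" if "x \<le> y" for x y
    unfolding F_def using that by (intro finite_measure_mono) auto
  have Fnn: "F x \<ge> 0" for x unfolding F_def by simp
  have R: "((\<lambda>x. F (2*x) / F x) \<longlongrightarrow> 2 powr (-\<alpha>)) at_top" "eventually (\<lambda>x. F x > 0) at_top"
    unfolding F_def using tail_ratio[OF P rv] by simp_all
  have pow2: "2 powr (-a) * y powr (-a) = (2*y) powr (-a)" if "y > 0" for a y :: real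
    using that by (simp add: powr_mult)
  {
    assume "\<beta> > \<alpha>" "\<beta> > 0"
    then have "2 powr (-\<beta>) < 2 powr (-\<alpha>)" by simp
    then have "eventually (\<lambda>x. F (2*x) / F x > 2 powr (-\<beta>)) at_top"
      using order_tendstoD(1)[OF R(1)] by blast
    with R(2) have "eventually (\<lambda>x. x > 0 \<and> F x > 0 \<and> F (2*x) / F x > 2 powr (-\<beta>)) at_top"
      using eventually_gt_at_top[of 0] by eventually_elim auto
    then obtain x0 where x0: "\<And>x. x \<ge> x0 \<Longrightarrow> x > 0 \<and> F x > 0 \<and> F (2*x) / F x > 2 powr (-\<beta>)"
      unfolding eventually_at_top_linorder by blast
    then have x0p: "x0 > 0" by auto
    have step: "F (2*x) \<ge> 2 powr (-\<beta>) * F x" if "x \<ge> x0" for x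
    proof -
      have a: "0 < F x" "2 powr -\<beta> < F (2*x)/F x" using x0[OF that] by auto
      then have "2 powr -\<beta> * F x < F(2*x)" by (simp add: pos_less_divide_eq)
      then show ?thesis by simp
    qed
    define c where "c = F (2*x0) * x0 powr \<beta>"
    have F2x0: "F (2*x0) > 0" using x0[of "2*x0"] x0p by auto
    have cpos: "c > 0" unfolding c_def using F2x0 x0p by simp
    have claim: "\<forall>x. x0 \<le> x \<and> x \<le> 2^(Suc k) * x0 \<longrightarrow> F x \<ge> c * x powr (-\<beta>)" for k
    proof (induction k)
      case 0
      show ?case
      proof (intro allI impI)
        fix x assume x: "x0 \<le> x \<and> x \<le> 2 ^ Suc 0 * x0"
        have "c * x powr (-\<beta>) \<le> c * x0 powr (-\<beta>)"
          using x x0p cpos \<open>\<beta> > 0\<close> by (intro mult_left_mono powr_mono2') auto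
        also have "\<dots> = F (2*x0)" unfolding c_def using x0p by (simp add: powr_minus field_simps)
        also have "\<dots> \<le> F x" using x by (intro mono) auto
        finally show "c * x powr (-\<beta>) \<le> F x" .
      qed
    next
      case (Suc k)
      show ?case
      proof (intro allI impI)
        fix x assume x: "x0 \<le> x \<and> x \<le> 2 ^ Suc (Suc k) * x0"
        show "c * x powr (-\<beta>) \<le> F x"
        proof (cases "x \<le> 2 ^ Suc k * x0")
          case True then show ?thesis using Suc x by auto
        next
          case False
          define y where "y = x / 2"
          have "2 ^ Suc k * x0 \<ge> 2 * x0" using x0p by (simp add: mult_right_mono)
          then have y: "x0 \<le> y \<and> y \<le> 2 ^ Suc k * x0" using False x unfolding y_def by auto
          have ypos: "y > 0" using y x0p by auto
          have "c * x powr (-\<beta>) = 2 powr (-\<beta>) * (c * y powr (-\<beta>))"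
            unfolding y_def using x x0p by (simp add: powr_divide powr_minus field_simps)
          also have "\<dots> \<le> 2 powr (-\<beta>) * F y" using Suc y by (intro mult_left_mono) auto
          also have "\<dots> \<le> F (2*y)" using step y by auto
          finally show ?thesis unfolding y_def by simp
        qed
      qed
    qed
    have "\<forall>x\<ge>x0. F x \<ge> c * x powr (-\<beta>)"
    proof (intro allI impI)
      fix x assume x: "x \<ge> x0"
      obtain k where "x / x0 < 2 ^ k" using real_arch_pow[of 2 "x/x0"] by auto
      then have "x < x0 * 2^k" using x0p by (simp add: field_simps)
      moreover have "x0 * 2^k \<le> 2^(Suc k) * x0" using x0p by simp
      ultimately have "x \<le> 2^(Suc k) * x0" by linarith
      then show "F x \<ge> c * x powr (-\<beta>)" using claim x by blast
    qed
    then show "\<exists>c>0. \<exists>x0>0. \<forall>x\<ge>x0. F x \<ge> c * x powr (-\<beta>)" using cpos x0p by blast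
  }
  {
    assume g: "\<gamma> < \<alpha>" "\<gamma> > 0"
    then have "2 powr (-\<gamma>) > 2 powr (-\<alpha>)" by simp
    then have "eventually (\<lambda>x. F (2*x) / F x < 2 powr (-\<gamma>)) at_top"
      using order_tendstoD(2)[OF R(1)] by blast
    with R(2) have "eventually (\<lambda>x. x > 0 \<and> F x > 0 \<and> F (2*x) / F x < 2 powr (-\<gamma>)) at_top"
      using eventually_gt_at_top[of 0] by eventually_elim auto
    then obtain x0 where x0: "\<And>x. x \<ge> x0 \<Longrightarrow> x > 0 \<and> F x > 0 \<and> F (2*x) / F x < 2 powr (-\<gamma>)"
      unfolding eventually_at_top_linorder by blast
    then have x0p: "x0 > 0" by auto
    have step: "F (2*x) \<le> 2 powr (-\<gamma>) * F x" if "x \<ge> x0" for x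
    proof -
      have a: "0 < F x" "F (2*x)/F x < 2 powr -\<gamma>" using x0[OF that] by auto
      then have "F(2*x) < 2 powr -\<gamma> * F x" by (simp add: pos_divide_less_eq)
      then show ?thesis by simp
    qed
    define C where "C = F x0 * (2*x0) powr \<gamma>"
    have Cnn: "C \<ge> 0" unfolding C_def using Fnn by simp
    have claim: "\<forall>x. x0 \<le> x \<and> x \<le> 2^(Suc k) * x0 \<longrightarrow> F x \<le> C * x powr (-\<gamma>)" for k
    proof (induction k)
      case 0
      show ?case
      proof (intro allI impI)
        fix x assume x: "x0 \<le> x \<and> x \<le> 2 ^ Suc 0 * x0"
        have "F x \<le> F x0" using x by (intro mono) auto
        also have "\<dots> = C * (2*x0) powr (-\<gamma>)" unfolding C_def using x0p by (simp add: powr_minus field_simps)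
        also have "\<dots> \<le> C * x powr (-\<gamma>)"
          using x x0p Cnn g by (intro mult_left_mono powr_mono2') auto
        finally show "F x \<le> C * x powr (-\<gamma>)" .
      qed
    next
      case (Suc k)
      show ?case
      proof (intro allI impI)
        fix x assume x: "x0 \<le> x \<and> x \<le> 2 ^ Suc (Suc k) * x0"
        show "F x \<le> C * x powr (-\<gamma>)"
        proof (cases "x \<le> 2 ^ Suc k * x0")
          case True then show ?thesis using Suc x by auto
        next
          case False
          define y where "y = x / 2"
          have "2 ^ Suc k * x0 \<ge> 2 * x0" using x0p by (simp add: mult_right_mono)
          then have y: "x0 \<le> y \<and> y \<le> 2 ^ Suc k * x0" using False x unfolding y_def by auto
          have "F x = F (2*y)" unfolding y_def by simp
          also have "\<dots> \<le> 2 powr (-\<gamma>) * F y" using step y by auto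
          also have "\<dots> \<le> 2 powr (-\<gamma>) * (C * y powr (-\<gamma>))" using Suc y by (intro mult_left_mono) auto
          also have "\<dots> = C * x powr (-\<gamma>)"
            unfolding y_def using x x0p by (simp add: powr_divide powr_minus field_simps)
          finally show ?thesis .
        qed
      qed
    qed
    have "\<forall>x\<ge>x0. F x \<le> C * x powr (-\<gamma>)"
    proof (intro allI impI)
      fix x assume x: "x \<ge> x0"
      obtain k where "x / x0 < 2 ^ k" using real_arch_pow[of 2 "x/x0"] by auto
      then have "x < x0 * 2^k" using x0p by (simp add: field_simps)
      moreover have "x0 * 2^k \<le> 2^(Suc k) * x0" using x0p by simp
      ultimately have "x \<le> 2^(Suc k) * x0" by linarith
      then show "F x \<le> C * x powr (-\<gamma>)" using claim x by blast
    qed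
    then show "\<exists>C\<ge>0. \<exists>x0>0. \<forall>x\<ge>x0. F x \<le> C * x powr (-\<gamma>)" using Cnn x0p by blast
  }
qed



lemma pow2_powr: "((2::real)^k) powr s = (2 powr s)^k"
  by (simp add: powr_realpow[symmetric] powr_powr mult.commute)

lemma rv_moment:
  assumes P: "prob_space M" and rv: "regularly_varying M W \<alpha>" and r: "0 < r" "r < \<alpha>"
  shows "integrable M (\<lambda>\<omega>. \<bar>W \<omega>\<bar> powr r)"
proof -
  interpret prob_space M by (rule P)
  have Wm[measurable]: "W \<in> borel_measurable M" using rv unfolding regularly_varying_def by auto
  define \<gamma> where "\<gamma> = (r + \<alpha>) / 2"
  have g: "r < \<gamma>" "\<gamma> < \<alpha>" "0 < \<gamma>" using r unfolding \<gamma>_def by auto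
  obtain C x0 where C: "C \<ge> 0" "x0 > 0" and CF: "\<And>x. x \<ge> x0 \<Longrightarrow> prob {\<omega> \<in> space M. \<bar>W \<omega>\<bar> > x} \<le> C * x powr (-\<gamma>)"
    using tail_upper[OF P rv g(2) g(3)] by auto
  define A where "A k = {\<omega> \<in> space M. \<bar>W \<omega>\<bar> > 2^k * x0}" for k :: nat
  have Am[measurable]: "A k \<in> sets M" for k unfolding A_def by measurable
  define u where "u k = (2^(Suc k) * x0) powr r" for k :: nat
  have pw: "ennreal (\<bar>W \<omega>\<bar> powr r) \<le> ennreal (x0 powr r) + (\<Sum>k. ennreal (u k) * indicator (A k) \<omega>)"
    if \<omega>: "\<omega> \<in> space M" for \<omega>
  proof (cases "\<bar>W \<omega>\<bar> \<le> x0")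
    case True
    then have "\<bar>W \<omega>\<bar> powr r \<le> x0 powr r" using r by (intro powr_mono2) auto
    then have "ennreal (\<bar>W \<omega>\<bar> powr r) \<le> ennreal (x0 powr r)" by simp
    then show ?thesis by (rule order_trans) (simp add: add_increasing2)
  next
    case False
    obtain n where "\<bar>W \<omega>\<bar> / x0 < 2 ^ n" using real_arch_pow[of 2 "\<bar>W \<omega>\<bar>/x0"] by auto
    then have "\<bar>W \<omega>\<bar> \<le> 2^n * x0" using C by (simp add: field_simps)
    then obtain k where k: "\<not> \<bar>W \<omega>\<bar> \<le> 2^k * x0" "\<bar>W \<omega>\<bar> \<le> 2^(Suc k) * x0"
      using ex_least_nat_less[of "\<lambda>n. \<bar>W \<omega>\<bar> \<le> 2^n * x0" n] False by auto
    have "\<bar>W \<omega>\<bar> powr r \<le> u k" unfolding u_def using k r by (intro powr_mono2) auto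
    then have "ennreal (\<bar>W \<omega>\<bar> powr r) \<le> ennreal (u k) * indicator (A k) \<omega>"
      using k \<omega> unfolding A_def by (simp add: indicator_def ennreal_leI)
    also have "\<dots> \<le> (\<Sum>k. ennreal (u k) * indicator (A k) \<omega>)"
    proof (rule ccontr)
      assume "\<not> ennreal (u k) * indicator (A k) \<omega> \<le> (\<Sum>k. ennreal (u k) * indicator (A k) \<omega>)"
      then have "(\<Sum>k. ennreal (u k) * indicator (A k) \<omega>) < ennreal (u k) * indicator (A k) \<omega>"
        by (simp add: not_le)
      then have "ennreal (u k) * indicator (A k) \<omega> < ennreal (u k) * indicator (A k) \<omega>"
        by (rule ennreal_suminf_lessD)
      then show False by simp
    qed
    finally show ?thesis by (simp add: add_increasing)
  qed
  define q where "q = 2 powr (r - \<gamma>)"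
  have "2 powr (r - \<gamma>) < 2 powr 0" using g by (intro powr_less_mono) auto
  then have q: "0 \<le> q" "q < 1" unfolding q_def by auto
  define K where "K = 2 powr r * x0 powr (r - \<gamma>) * C"
  have K: "K \<ge> 0" unfolding K_def using C by simp
  have ub: "u k * prob (A k) \<le> K * q^k" for k
  proof -
    have "prob (A k) \<le> C * (2^k * x0) powr (-\<gamma>)"
      unfolding A_def using C by (intro CF) (simp add: mult_le_cancel_right1)
    then have "u k * prob (A k) \<le> u k * (C * (2^k * x0) powr (-\<gamma>))"
      unfolding u_def by (intro mult_left_mono) auto
    also have "\<dots> = K * q^k"
    proof -
      have e1: "(2^(Suc k)*x0) powr r = 2 powr r * (2 powr r)^k * x0 powr r"
        using C by (simp add: powr_mult pow2_powr)
      have e2: "(2^k*x0) powr (-\<gamma>) = (2 powr (-\<gamma>))^k * x0 powr (-\<gamma>)"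
        using C by (simp add: powr_mult pow2_powr)
      have e3: "q^k = (2 powr r)^k * (2 powr (-\<gamma>))^k"
        unfolding q_def by (simp add: powr_add[symmetric] power_mult_distrib[symmetric])
      have e4: "x0 powr (r-\<gamma>) = x0 powr r * x0 powr (-\<gamma>)" by (simp add: powr_add[symmetric])
      show ?thesis unfolding u_def K_def e1 e2 e3 e4 by (simp only: ac_simps)
    qed
    finally show ?thesis .
  qed
  have "(\<integral>\<^sup>+\<omega>. ennreal (norm (\<bar>W \<omega>\<bar> powr r)) \<partial>M) \<le>
        (\<integral>\<^sup>+\<omega>. ennreal (x0 powr r) + (\<Sum>k. ennreal (u k) * indicator (A k) \<omega>) \<partial>M)"
    using pw by (intro nn_integral_mono) auto
  also have "\<dots> = ennreal (x0 powr r) + (\<Sum>k. ennreal (u k) * emeasure M (A k))"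
    by (subst nn_integral_add) (auto simp: nn_integral_suminf nn_integral_cmult_indicator emeasure_space_1)
  also have "\<dots> \<le> ennreal (x0 powr r) + (\<Sum>k. ennreal (K * q^k))"
  proof -
    have "ennreal (u k) * emeasure M (A k) \<le> ennreal (K * q^k)" for k
      using ub[of k] by (simp add: emeasure_eq_measure ennreal_mult'[symmetric] u_def ennreal_leI)
    then show ?thesis by (intro add_mono suminf_le) auto
  qed
  also have "\<dots> < \<infinity>"
  proof -
    have "summable (\<lambda>k. K * q^k)" using q by (intro summable_mult summable_geometric) auto
    then have "(\<Sum>k. ennreal (K * q^k)) \<noteq> top" using K q by (intro ennreal_suminf_neq_top) auto
    then show ?thesis by (simp add: less_top)
  qed
  finally show ?thesis by (intro integrableI_bounded) auto
qed



lemma growth: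
  fixes a :: "nat \<Rightarrow> real"
  assumes P: "prob_space M" and Vm[measurable]: "V \<in> borel_measurable M" and \<beta>: "\<beta> > 0"
    and c: "c > 0" "x0 > 0" and low: "\<forall>x\<ge>x0. measure M {\<omega>\<in>space M. \<bar>V \<omega>\<bar> > x} \<ge> c * x powr (-\<beta>)"
    and lim: "(\<lambda>n. real n * measure M {\<omega>\<in>space M. \<bar>V \<omega>\<bar> > a n}) \<longlonglongrightarrow> 1"
  shows growth_top: "filterlim a at_top sequentially"
    and growth_zero: "\<gamma> > \<beta> \<Longrightarrow> (\<lambda>n. real n * a n powr (-\<gamma>)) \<longlonglongrightarrow> 0"
proof -
  interpret prob_space M by (rule P)
  define F where "F x = measure M {\<omega>\<in>space M. \<bar>V \<omega>\<bar> > x}" for x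
  have mono: "F y \<le> F x" if "x \<le> y" for x y
    unfolding F_def using that by (intro finite_measure_mono) auto
  have ev2: "eventually (\<lambda>n. real n * F (a n) < 2) sequentially"
    using order_tendstoD(2)[OF lim, of 2] unfolding F_def by simp
  show top: "filterlim a at_top sequentially"
    unfolding filterlim_at_top
  proof
    fix Z :: real
    define B where "B = max Z x0"
    have FB: "F B > 0"
    proof -
      have "B \<ge> x0" unfolding B_def by auto
      then have "F B \<ge> c * B powr (-\<beta>)" using low unfolding F_def by auto
      moreover have "c * B powr (-\<beta>) > 0" using c unfolding B_def by auto
      ultimately show ?thesis by linarith
    qed
    have evN: "eventually (\<lambda>n. real n \<ge> 2 / F B + 1) sequentially"
      using eventually_ge_at_top[of "nat \<lceil>2 / F B + 1\<rceil>"]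
      by eventually_elim linarith
    show "eventually (\<lambda>n. Z \<le> a n) sequentially"
      using ev2 evN
    proof eventually_elim
      case (elim n)
      show ?case
      proof (rule ccontr)
        assume "\<not> Z \<le> a n"
        then have "a n \<le> B" unfolding B_def by auto
        then have "F B \<le> F (a n)" by (rule mono)
        have h1: "real n * F B \<ge> (2 / F B + 1) * F B" using elim FB by (intro mult_right_mono) auto
        have h2: "(2 / F B + 1) * F B > 2" using FB by (simp add: field_simps)
        from h1 h2 have "real n * F B > 2" by linarith
        moreover have "real n * F B \<le> real n * F (a n)"
          using \<open>F B \<le> F (a n)\<close> by (intro mult_left_mono) auto
        ultimately show False using elim by linarith
      qed
    qed
  qed
  assume g: "\<gamma> > \<beta>"
  have ev3: "eventually (\<lambda>n. a n \<ge> x0) sequentially"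
    using top unfolding filterlim_at_top by auto
  have up: "eventually (\<lambda>n. real n * a n powr (-\<gamma>) \<le> (2/c) * a n powr (\<beta> - \<gamma>)) sequentially"
    using ev2 ev3
  proof eventually_elim
    case (elim n)
    have an: "a n > 0" using elim c by auto
    have "real n * (c * a n powr (-\<beta>)) \<le> real n * F (a n)"
      using low elim unfolding F_def by (intro mult_left_mono) auto
    also have "\<dots> \<le> 2" using elim by simp
    finally have "real n * a n powr (-\<beta>) \<le> 2 / c" using c by (simp add: field_simps)
    then have "real n * a n powr (-\<beta>) * a n powr (\<beta> - \<gamma>) \<le> 2 / c * a n powr (\<beta> - \<gamma>)"
      by (intro mult_right_mono) auto
    moreover have "a n powr (-\<beta>) * a n powr (\<beta> - \<gamma>) = a n powr (-\<gamma>)"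
      using an by (simp add: powr_add[symmetric])
    ultimately show ?case by (simp add: mult.assoc)
  qed
  have "(\<lambda>n. (2/c) * a n powr (\<beta> - \<gamma>)) \<longlonglongrightarrow> (2/c) * 0"
    by (intro tendsto_mult tendsto_const tendsto_neg_powr top) (use g in auto)
  then show "(\<lambda>n. real n * a n powr (-\<gamma>)) \<longlonglongrightarrow> 0"
    by (intro tendsto_sandwich[OF _ up tendsto_const]) auto
qed

lemma conv_from_bound:
  fixes a :: "nat \<Rightarrow> real"
  assumes bnd: "\<And>n b. b > 0 \<Longrightarrow> measure M {\<omega>\<in>space M. \<bar>S n \<omega>\<bar> > b} \<le> K * real n / b powr g"
    and g: "g > 0" and top: "filterlim a at_top sequentially"
    and z: "(\<lambda>n. real n * a n powr (-2*g)) \<longlonglongrightarrow> 0" and e: "\<epsilon> > 0"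
  shows "(\<lambda>n. measure M {\<omega>\<in>space M. \<bar>S n \<omega>\<bar> > \<epsilon> * (a n)\<^sup>2}) \<longlonglongrightarrow> 0"
proof -
  have ev: "eventually (\<lambda>n. a n \<ge> 1) sequentially"
    using top unfolding filterlim_at_top by auto
  have up: "eventually (\<lambda>n. measure M {\<omega>\<in>space M. \<bar>S n \<omega>\<bar> > \<epsilon> * (a n)\<^sup>2}
      \<le> (K / \<epsilon> powr g) * (real n * a n powr (-2*g))) sequentially"
    using ev
  proof eventually_elim
    case (elim n)
    have an: "a n > 0" using elim by auto
    have sq: "(a n)\<^sup>2 = a n powr 2" using an by (simp add: powr_numeral)
    have "(\<epsilon> * (a n)\<^sup>2) powr g = \<epsilon> powr g * ((a n)\<^sup>2) powr g"
      using an e by (simp add: powr_mult)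
    also have "((a n)\<^sup>2) powr g = a n powr (2*g)" unfolding sq by (simp add: powr_powr)
    finally have "(\<epsilon> * (a n)\<^sup>2) powr g = \<epsilon> powr g * a n powr (2*g)" .
    moreover have "a n powr (-2*g) = 1 / a n powr (2*g)"
      by (simp add: powr_minus_divide)
    moreover have "measure M {\<omega>\<in>space M. \<bar>S n \<omega>\<bar> > \<epsilon> * (a n)\<^sup>2} \<le> K * real n / (\<epsilon> * (a n)\<^sup>2) powr g"
      using an e by (intro bnd) auto
    ultimately show ?case by simp
  qed
  have "(\<lambda>n. (K / \<epsilon> powr g) * (real n * a n powr (-2*g))) \<longlonglongrightarrow> (K / \<epsilon> powr g) * 0"
    by (intro tendsto_mult tendsto_const z)
  then show ?thesis
    by (intro tendsto_sandwich[OF _ up tendsto_const]) auto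
qed



lemma frac_powr_ge: "0 \<le> u \<Longrightarrow> u \<le> 1 \<Longrightarrow> 0 < r \<Longrightarrow> r \<le> 1 \<Longrightarrow> u \<le> u powr (r::real)"
  by (metis powr_mono' powr_one)

lemma powr_subadd2:
  fixes x y r :: real
  assumes "x \<ge> 0" "y \<ge> 0" "0 < r" "r \<le> 1"
  shows "(x + y) powr r \<le> x powr r + y powr r"
proof (cases "x + y = 0")
  case True then show ?thesis using assms by auto
next
  case False
  then have s: "x + y > 0" using assms by auto
  have a: "x / (x+y) \<le> (x / (x+y)) powr r"
    using assms s by (intro frac_powr_ge) auto
  have b: "y / (x+y) \<le> (y / (x+y)) powr r"
    using assms s by (intro frac_powr_ge) auto
  have "1 = x / (x+y) + y / (x+y)" using s by (simp add: add_divide_distrib[symmetric])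
  also have "\<dots> \<le> (x / (x+y)) powr r + (y / (x+y)) powr r" using a b by simp
  also have "\<dots> = (x powr r + y powr r) / (x+y) powr r"
    using assms s by (simp add: powr_divide add_divide_distrib)
  finally show ?thesis using s by (simp add: field_simps)
qed

lemma powr_subadd_sum:
  fixes z :: "'i \<Rightarrow> real"
  assumes "finite T" "\<And>t. t \<in> T \<Longrightarrow> z t \<ge> 0" "0 < r" "r \<le> 1"
  shows "(\<Sum>t\<in>T. z t) powr r \<le> (\<Sum>t\<in>T. z t powr r)"
  using assms(1,2)
proof (induction T rule: finite_induct)
  case empty then show ?case by simp
next
  case (insert x F)
  have "(\<Sum>t\<in>insert x F. z t) powr r = (z x + (\<Sum>t\<in>F. z t)) powr r" using insert by simp
  also have "\<dots> \<le> z x powr r + (\<Sum>t\<in>F. z t) powr r"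
    using insert assms by (intro powr_subadd2 sum_nonneg) auto
  also have "\<dots> \<le> z x powr r + (\<Sum>t\<in>F. z t powr r)" using insert by auto
  finally show ?case using insert by simp
qed

context prob_space
begin

lemma sub_bound:
  fixes Y :: "'i \<Rightarrow> 'a \<Rightarrow> real"
  assumes T: "finite T" and r: "0 < r" "r \<le> 1"
    and m[measurable]: "\<And>t. t \<in> T \<Longrightarrow> Y t \<in> borel_measurable M"
    and int: "\<And>t. t \<in> T \<Longrightarrow> integrable M (\<lambda>\<omega>. \<bar>Y t \<omega>\<bar> powr r)"
    and C: "\<And>t. t \<in> T \<Longrightarrow> (\<integral>\<omega>. \<bar>Y t \<omega>\<bar> powr r \<partial>M) \<le> C"
    and b: "b > 0"
  shows "prob {\<omega>\<in>space M. \<bar>\<Sum>t\<in>T. Y t \<omega>\<bar> > b} \<le> real (card T) * C / b powr r"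
proof -
  have sm[measurable]: "(\<lambda>\<omega>. \<Sum>t\<in>T. Y t \<omega>) \<in> borel_measurable M"
    using m by (intro borel_measurable_sum) auto
  have pw: "\<bar>\<Sum>t\<in>T. Y t \<omega>\<bar> powr r \<le> (\<Sum>t\<in>T. \<bar>Y t \<omega>\<bar> powr r)" for \<omega>
  proof -
    have "\<bar>\<Sum>t\<in>T. Y t \<omega>\<bar> powr r \<le> (\<Sum>t\<in>T. \<bar>Y t \<omega>\<bar>) powr r"
      using r by (intro powr_mono2) (auto intro: sum_abs)
    also have "\<dots> \<le> (\<Sum>t\<in>T. \<bar>Y t \<omega>\<bar> powr r)"
      using T r by (intro powr_subadd_sum) auto
    finally show ?thesis .
  qed
  have intS: "integrable M (\<lambda>\<omega>. \<Sum>t\<in>T. \<bar>Y t \<omega>\<bar> powr r)"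
    by (rule Bochner_Integration.integrable_sum[where I=T and f="\<lambda>t \<omega>. \<bar>Y t \<omega>\<bar> powr r"]) (rule int)
  have intP: "integrable M (\<lambda>\<omega>. \<bar>\<Sum>t\<in>T. Y t \<omega>\<bar> powr r)"
  proof (rule Bochner_Integration.integrable_bound[OF intS])
    show "(\<lambda>\<omega>. \<bar>\<Sum>t\<in>T. Y t \<omega>\<bar> powr r) \<in> borel_measurable M" by measurable
    show "AE x in M. norm (\<bar>\<Sum>t\<in>T. Y t x\<bar> powr r) \<le> norm (\<Sum>t\<in>T. \<bar>Y t x\<bar> powr r)"
      using pw by (auto intro!: AE_I2 order_trans[OF _ abs_ge_self])
  qed
  have "prob {\<omega>\<in>space M. \<bar>\<Sum>t\<in>T. Y t \<omega>\<bar> > b} \<le> prob {\<omega>\<in>space M. \<bar>\<Sum>t\<in>T. Y t \<omega>\<bar> powr r \<ge> b powr r}"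
    using b r by (intro finite_measure_mono) (auto intro: powr_mono2 less_imp_le)
  also have "\<dots> \<le> (\<integral>\<omega>. \<bar>\<Sum>t\<in>T. Y t \<omega>\<bar> powr r \<partial>M) / b powr r"
    using b by (intro integral_Markov_inequality_measure[OF intP, of "space M"]) auto
  also have "\<dots> \<le> (\<integral>\<omega>. (\<Sum>t\<in>T. \<bar>Y t \<omega>\<bar> powr r) \<partial>M) / b powr r"
    using b by (intro divide_right_mono integral_mono[OF intP intS] pw) auto
  also have "(\<integral>\<omega>. (\<Sum>t\<in>T. \<bar>Y t \<omega>\<bar> powr r) \<partial>M) = (\<Sum>t\<in>T. \<integral>\<omega>. \<bar>Y t \<omega>\<bar> powr r \<partial>M)"
    by (rule Bochner_Integration.integral_sum[where I=T and f="\<lambda>t \<omega>. \<bar>Y t \<omega>\<bar> powr r"]) (rule int)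
  also have "(\<Sum>t\<in>T. \<integral>\<omega>. \<bar>Y t \<omega>\<bar> powr r \<partial>M) \<le> real (card T) * C"
    using C sum_mono[of T "\<lambda>t. \<integral>\<omega>. \<bar>Y t \<omega>\<bar> powr r \<partial>M" "\<lambda>_. C"] by simp
  finally show ?thesis using b by (simp add: divide_right_mono)
qed

lemma sm_bound:
  fixes Y :: "'i \<Rightarrow> 'a \<Rightarrow> real"
  assumes T: "finite T"
    and m[measurable]: "\<And>t. t \<in> T \<Longrightarrow> Y t \<in> borel_measurable M"
    and int: "\<And>t. t \<in> T \<Longrightarrow> integrable M (\<lambda>\<omega>. (Y t \<omega>)\<^sup>2)"
    and orth: "\<And>t s. t \<in> T \<Longrightarrow> s \<in> T \<Longrightarrow> t \<noteq> s \<Longrightarrow> (\<integral>\<omega>. Y t \<omega> * Y s \<omega> \<partial>M) = 0"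
    and C: "\<And>t. t \<in> T \<Longrightarrow> (\<integral>\<omega>. (Y t \<omega>)\<^sup>2 \<partial>M) \<le> C"
    and b: "b > 0"
  shows "prob {\<omega>\<in>space M. \<bar>\<Sum>t\<in>T. Y t \<omega>\<bar> > b} \<le> real (card T) * C / b\<^sup>2"
proof -
  have intp: "integrable M (\<lambda>\<omega>. Y t \<omega> * Y s \<omega>)" if "t \<in> T" "s \<in> T" for t s
  proof (rule Bochner_Integration.integrable_bound[where f="\<lambda>\<omega>. (Y t \<omega>)\<^sup>2 + (Y s \<omega>)\<^sup>2"])
    show "integrable M (\<lambda>\<omega>. (Y t \<omega>)\<^sup>2 + (Y s \<omega>)\<^sup>2)" using int that by auto
    show "(\<lambda>\<omega>. Y t \<omega> * Y s \<omega>) \<in> borel_measurable M" using that by measurable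
    show "AE x in M. norm (Y t x * Y s x) \<le> norm ((Y t x)\<^sup>2 + (Y s x)\<^sup>2)"
    proof (intro AE_I2)
      fix x
      have "2 * \<bar>Y t x * Y s x\<bar> \<le> (Y t x)\<^sup>2 + (Y s x)\<^sup>2"
        using sum_squares_bound[of "\<bar>Y t x\<bar>" "\<bar>Y s x\<bar>"] by (simp add: abs_mult)
      then show "norm (Y t x * Y s x) \<le> norm ((Y t x)\<^sup>2 + (Y s x)\<^sup>2)" by auto
    qed
  qed
  have sq: "(\<Sum>t\<in>T. Y t \<omega>)\<^sup>2 = (\<Sum>t\<in>T. \<Sum>s\<in>T. Y t \<omega> * Y s \<omega>)" for \<omega>
    by (simp add: power2_eq_square sum_product)
  have intS1: "integrable M (\<lambda>\<omega>. \<Sum>s\<in>T. Y t \<omega> * Y s \<omega>)" if "t \<in> T" for t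
    by (rule Bochner_Integration.integrable_sum) (rule intp[OF that])
  have intS: "integrable M (\<lambda>\<omega>. (\<Sum>t\<in>T. Y t \<omega>)\<^sup>2)"
    unfolding sq by (rule Bochner_Integration.integrable_sum) (rule intS1)
  have "(\<integral>\<omega>. (\<Sum>t\<in>T. Y t \<omega>)\<^sup>2 \<partial>M) = (\<Sum>t\<in>T. \<integral>\<omega>. (\<Sum>s\<in>T. Y t \<omega> * Y s \<omega>) \<partial>M)"
    unfolding sq by (rule Bochner_Integration.integral_sum) (rule intS1)
  also have "\<dots> = (\<Sum>t\<in>T. \<Sum>s\<in>T. \<integral>\<omega>. Y t \<omega> * Y s \<omega> \<partial>M)"
    by (intro sum.cong refl Bochner_Integration.integral_sum intp)
  also have "\<dots> = (\<Sum>t\<in>T. \<integral>\<omega>. (Y t \<omega>)\<^sup>2 \<partial>M)"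
  proof (intro sum.cong refl)
    fix t assume t: "t \<in> T"
    have "(\<Sum>s\<in>T. \<integral>\<omega>. Y t \<omega> * Y s \<omega> \<partial>M) = (\<integral>\<omega>. Y t \<omega> * Y t \<omega> \<partial>M) + (\<Sum>s\<in>T - {t}. \<integral>\<omega>. Y t \<omega> * Y s \<omega> \<partial>M)"
      using T t by (simp add: sum.remove)
    also have "(\<Sum>s\<in>T - {t}. \<integral>\<omega>. Y t \<omega> * Y s \<omega> \<partial>M) = 0"
      using orth t by (intro sum.neutral) auto
    finally show "(\<Sum>s\<in>T. \<integral>\<omega>. Y t \<omega> * Y s \<omega> \<partial>M) = (\<integral>\<omega>. (Y t \<omega>)\<^sup>2 \<partial>M)"
      by (simp add: power2_eq_square)
  qed
  also have "\<dots> \<le> real (card T) * C"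
    using C sum_mono[of T "\<lambda>t. \<integral>\<omega>. (Y t \<omega>)\<^sup>2 \<partial>M" "\<lambda>_. C"] by simp
  finally have E: "(\<integral>\<omega>. (\<Sum>t\<in>T. Y t \<omega>)\<^sup>2 \<partial>M) \<le> real (card T) * C" .
  have "prob {\<omega>\<in>space M. \<bar>\<Sum>t\<in>T. Y t \<omega>\<bar> > b} \<le> prob {\<omega>\<in>space M. (\<Sum>t\<in>T. Y t \<omega>)\<^sup>2 \<ge> b\<^sup>2}"
  proof (intro finite_measure_mono)
    show "{\<omega>\<in>space M. \<bar>\<Sum>t\<in>T. Y t \<omega>\<bar> > b} \<subseteq> {\<omega>\<in>space M. (\<Sum>t\<in>T. Y t \<omega>)\<^sup>2 \<ge> b\<^sup>2}"
    proof safe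
      fix \<omega> assume "\<bar>\<Sum>t\<in>T. Y t \<omega>\<bar> > b"
      then have "b\<^sup>2 \<le> (\<bar>\<Sum>t\<in>T. Y t \<omega>\<bar>)\<^sup>2" using b by (intro power_mono) auto
      then show "b\<^sup>2 \<le> (\<Sum>t\<in>T. Y t \<omega>)\<^sup>2" by simp
    qed
    show "{\<omega>\<in>space M. (\<Sum>t\<in>T. Y t \<omega>)\<^sup>2 \<ge> b\<^sup>2} \<in> sets M" using m by measurable
  qed
  also have "\<dots> \<le> (\<integral>\<omega>. (\<Sum>t\<in>T. Y t \<omega>)\<^sup>2 \<partial>M) / b\<^sup>2"
    using b by (intro integral_Markov_inequality_measure[OF intS, of "space M"]) auto
  also have "\<dots> \<le> real (card T) * C / b\<^sup>2"
    using E b by (intro divide_right_mono) auto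
  finally show ?thesis .
qed

end


context prob_space
begin

lemma tr_bound:
  fixes Y :: "'i \<Rightarrow> 'a \<Rightarrow> real"
  assumes T: "finite T" and r: "1 \<le> r" "r \<le> 2"
    and m[measurable]: "\<And>t. t \<in> T \<Longrightarrow> Y t \<in> borel_measurable M"
    and intr: "\<And>t. t \<in> T \<Longrightarrow> integrable M (\<lambda>\<omega>. \<bar>Y t \<omega>\<bar> powr r)"
    and C: "\<And>t. t \<in> T \<Longrightarrow> (\<integral>\<omega>. \<bar>Y t \<omega>\<bar> powr r \<partial>M) \<le> C"
    and int1: "\<And>t. t \<in> T \<Longrightarrow> integrable M (Y t)"
    and mean: "\<And>t. t \<in> T \<Longrightarrow> (\<integral>\<omega>. Y t \<omega> \<partial>M) = 0"
    and ind: "\<And>t s. t \<in> T \<Longrightarrow> s \<in> T \<Longrightarrow> t \<noteq> s \<Longrightarrow> indep_var borel (Y t) borel (Y s)"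
    and b: "b > 0"
  shows "prob {\<omega>\<in>space M. \<bar>\<Sum>t\<in>T. Y t \<omega>\<bar> > b} \<le> 8 * real (card T) * C / b powr r"
proof -
  define g where "g y = (if \<bar>y\<bar> \<le> b then y else 0)" for y :: real
  define h where "h y = (if \<bar>y\<bar> \<le> b then 0 else y)" for y :: real
  have gm[measurable]: "g \<in> borel_measurable borel" unfolding g_def by measurable
  have hm[measurable]: "h \<in> borel_measurable borel" unfolding h_def by measurable
  have gh: "g y + h y = y" for y unfolding g_def h_def by auto
  have gpw: "(g y)\<^sup>2 \<le> b powr (2-r) * \<bar>y\<bar> powr r" for y
  proof (cases "\<bar>y\<bar> \<le> b \<and> y \<noteq> 0")
    case True
    have "(g y)\<^sup>2 = \<bar>y\<bar> powr 2" using True unfolding g_def by (simp add: powr_numeral)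
    also have "\<dots> = \<bar>y\<bar> powr r * \<bar>y\<bar> powr (2-r)" using True by (simp add: powr_add[symmetric])
    also have "\<dots> \<le> \<bar>y\<bar> powr r * b powr (2-r)"
      using True r by (intro mult_left_mono powr_mono2) auto
    finally show ?thesis by (simp add: mult.commute)
  next
    case False then show ?thesis unfolding g_def by auto
  qed
  have hpw: "\<bar>h y\<bar> \<le> b powr (1-r) * \<bar>y\<bar> powr r" for y
  proof (cases "\<bar>y\<bar> \<le> b")
    case False
    then have y: "\<bar>y\<bar> > 0" using b by auto
    have "\<bar>h y\<bar> = \<bar>y\<bar> powr 1" using False y unfolding h_def by simp
    also have "\<dots> = \<bar>y\<bar> powr r * \<bar>y\<bar> powr (1-r)" using y by (simp add: powr_add[symmetric])
    also have "\<dots> \<le> \<bar>y\<bar> powr r * b powr (1-r)"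
      using False r b by (intro mult_left_mono powr_mono2') auto
    finally show ?thesis by (simp add: mult.commute)
  next
    case True then show ?thesis unfolding h_def by auto
  qed
  have gle: "\<bar>g y\<bar> \<le> \<bar>y\<bar>" for y unfolding g_def by auto
  have hle: "\<bar>h y\<bar> \<le> \<bar>y\<bar>" for y unfolding h_def by auto
  have gint: "integrable M (\<lambda>\<omega>. g (Y t \<omega>))" if t: "t \<in> T" for t
    by (rule Bochner_Integration.integrable_bound[OF int1[OF t]]) (use t gle in auto)
  have hint: "integrable M (\<lambda>\<omega>. h (Y t \<omega>))" if t: "t \<in> T" for t
    by (rule Bochner_Integration.integrable_bound[OF int1[OF t]]) (use t hle in auto)
  have g2int: "integrable M (\<lambda>\<omega>. (g (Y t \<omega>))\<^sup>2)" if t: "t \<in> T" for t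
  proof (rule Bochner_Integration.integrable_bound[where f="\<lambda>\<omega>. b powr (2-r) * \<bar>Y t \<omega>\<bar> powr r"])
    show "integrable M (\<lambda>\<omega>. b powr (2-r) * \<bar>Y t \<omega>\<bar> powr r)" using intr[OF t] by auto
    show "(\<lambda>\<omega>. (g (Y t \<omega>))\<^sup>2) \<in> borel_measurable M" using t by measurable
    show "AE x in M. norm ((g (Y t x))\<^sup>2) \<le> norm (b powr (2-r) * \<bar>Y t x\<bar> powr r)"
      using gpw by (auto intro!: AE_I2)
  qed
  define mm where "mm t = (\<integral>\<omega>. g (Y t \<omega>) \<partial>M)" for t
  define U where "U t \<omega> = g (Y t \<omega>) - mm t" for t \<omega>
  define V where "V t \<omega> = h (Y t \<omega>) + mm t" for t \<omega>
  have Um[measurable]: "U t \<in> borel_measurable M" if "t \<in> T" for t unfolding U_def using that by measurable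
  have Vm[measurable]: "V t \<in> borel_measurable M" if "t \<in> T" for t unfolding V_def using that by measurable
  have YUV: "Y t \<omega> = U t \<omega> + V t \<omega>" for t \<omega> unfolding U_def V_def using gh[of "Y t \<omega>"] by simp
  have mmh: "mm t = - (\<integral>\<omega>. h (Y t \<omega>) \<partial>M)" if t: "t \<in> T" for t
  proof -
    have "(\<integral>\<omega>. g (Y t \<omega>) \<partial>M) + (\<integral>\<omega>. h (Y t \<omega>) \<partial>M) = (\<integral>\<omega>. g (Y t \<omega>) + h (Y t \<omega>) \<partial>M)"
      using gint[OF t] hint[OF t] by simp
    also have "\<dots> = 0" using mean[OF t] by (simp add: gh)
    finally show ?thesis unfolding mm_def by simp
  qed
  have h1: "(\<integral>\<omega>. \<bar>h (Y t \<omega>)\<bar> \<partial>M) \<le> b powr (1-r) * C" if t: "t \<in> T" for t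
  proof -
    have "(\<integral>\<omega>. \<bar>h (Y t \<omega>)\<bar> \<partial>M) \<le> (\<integral>\<omega>. b powr (1-r) * \<bar>Y t \<omega>\<bar> powr r \<partial>M)"
      using hint[OF t] intr[OF t] hpw by (intro integral_mono) auto
    also have "\<dots> = b powr (1-r) * (\<integral>\<omega>. \<bar>Y t \<omega>\<bar> powr r \<partial>M)" by simp
    also have "\<dots> \<le> b powr (1-r) * C" using C[OF t] by (intro mult_left_mono) auto
    finally show ?thesis .
  qed
  have U2int: "integrable M (\<lambda>\<omega>. (U t \<omega>)\<^sup>2)" if t: "t \<in> T" for t
  proof -
    have "integrable M (\<lambda>\<omega>. (g (Y t \<omega>))\<^sup>2 - 2 * mm t * g (Y t \<omega>) + (mm t)\<^sup>2)"
      using g2int[OF t] gint[OF t] by auto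
    moreover have "(\<lambda>\<omega>. (g (Y t \<omega>))\<^sup>2 - 2 * mm t * g (Y t \<omega>) + (mm t)\<^sup>2) = (\<lambda>\<omega>. (U t \<omega>)\<^sup>2)"
      unfolding U_def by (auto simp: power2_eq_square algebra_simps)
    ultimately show ?thesis by simp
  qed
  have U2: "(\<integral>\<omega>. (U t \<omega>)\<^sup>2 \<partial>M) \<le> b powr (2-r) * C" if t: "t \<in> T" for t
  proof -
    have "(\<lambda>\<omega>. (U t \<omega>)\<^sup>2) = (\<lambda>\<omega>. (g (Y t \<omega>))\<^sup>2 - 2 * mm t * g (Y t \<omega>) + (mm t)\<^sup>2)"
      unfolding U_def by (auto simp: power2_eq_square algebra_simps)
    then have "(\<integral>\<omega>. (U t \<omega>)\<^sup>2 \<partial>M) = (\<integral>\<omega>. (g (Y t \<omega>))\<^sup>2 \<partial>M) - 2 * mm t * mm t + (mm t)\<^sup>2"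
      using g2int[OF t] gint[OF t] by (simp add: mm_def prob_space)
    also have "\<dots> \<le> (\<integral>\<omega>. (g (Y t \<omega>))\<^sup>2 \<partial>M)" by (simp add: power2_eq_square)
    also have "\<dots> \<le> (\<integral>\<omega>. b powr (2-r) * \<bar>Y t \<omega>\<bar> powr r \<partial>M)"
      using g2int[OF t] intr[OF t] gpw by (intro integral_mono) auto
    also have "\<dots> = b powr (2-r) * (\<integral>\<omega>. \<bar>Y t \<omega>\<bar> powr r \<partial>M)" by simp
    also have "\<dots> \<le> b powr (2-r) * C" using C[OF t] by (intro mult_left_mono) auto
    finally show ?thesis .
  qed
  have Uint: "integrable M (U t)" if t: "t \<in> T" for t
    unfolding U_def using gint[OF t] by auto
  have Umean: "(\<integral>\<omega>. U t \<omega> \<partial>M) = 0" if t: "t \<in> T" for t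
    unfolding U_def using gint[OF t] by (simp add: mm_def prob_space)
  have Uorth: "(\<integral>\<omega>. U t \<omega> * U s \<omega> \<partial>M) = 0" if ts: "t \<in> T" "s \<in> T" "t \<noteq> s" for t s
  proof -
    have "indep_var borel ((\<lambda>y. g y - mm t) \<circ> Y t) borel ((\<lambda>y. g y - mm s) \<circ> Y s)"
      by (rule indep_var_compose[OF ind[OF ts]]) auto
    then have iu: "indep_var borel (U t) borel (U s)"
      unfolding U_def comp_def by simp
    show ?thesis using indep_var_lebesgue_integral[OF iu Uint[OF ts(1)] Uint[OF ts(2)]] Umean ts by simp
  qed
  have PU: "prob {\<omega>\<in>space M. \<bar>\<Sum>t\<in>T. U t \<omega>\<bar> > b/2} \<le> real (card T) * (b powr (2-r) * C) / (b/2)\<^sup>2"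
    by (rule sm_bound[OF T Um U2int Uorth U2]) (use b in auto)
  have Vint: "integrable M (\<lambda>\<omega>. \<bar>V t \<omega>\<bar>)" if t: "t \<in> T" for t
    unfolding V_def using hint[OF t] by auto
  have V1: "(\<integral>\<omega>. \<bar>V t \<omega>\<bar> \<partial>M) \<le> 2 * (b powr (1-r) * C)" if t: "t \<in> T" for t
  proof -
    have "(\<integral>\<omega>. \<bar>V t \<omega>\<bar> \<partial>M) \<le> (\<integral>\<omega>. \<bar>h (Y t \<omega>)\<bar> + \<bar>mm t\<bar> \<partial>M)"
      using Vint[OF t] hint[OF t] unfolding V_def by (intro integral_mono) auto
    also have "\<dots> = (\<integral>\<omega>. \<bar>h (Y t \<omega>)\<bar> \<partial>M) + \<bar>mm t\<bar>"
      using hint[OF t] by (simp add: prob_space)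
    also have "\<bar>mm t\<bar> \<le> (\<integral>\<omega>. \<bar>h (Y t \<omega>)\<bar> \<partial>M)"
      unfolding mmh[OF t] by (simp add: integral_abs_bound)
    finally show ?thesis using h1[OF t] by simp
  qed
  have PV: "prob {\<omega>\<in>space M. \<bar>\<Sum>t\<in>T. V t \<omega>\<bar> > b/2} \<le> real (card T) * (2 * (b powr (1-r) * C)) / (b/2)"
  proof -
    have iS: "integrable M (\<lambda>\<omega>. \<Sum>t\<in>T. \<bar>V t \<omega>\<bar>)"
      by (rule Bochner_Integration.integrable_sum) (rule Vint)
    have iA: "integrable M (\<lambda>\<omega>. \<bar>\<Sum>t\<in>T. V t \<omega>\<bar>)"
    proof (rule Bochner_Integration.integrable_bound[OF iS])
      show "(\<lambda>\<omega>. \<bar>\<Sum>t\<in>T. V t \<omega>\<bar>) \<in> borel_measurable M" by measurable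
      show "AE x in M. norm (\<bar>\<Sum>t\<in>T. V t x\<bar>) \<le> norm (\<Sum>t\<in>T. \<bar>V t x\<bar>)"
        by (auto intro!: AE_I2 order_trans[OF sum_abs])
    qed
    have "prob {\<omega>\<in>space M. \<bar>\<Sum>t\<in>T. V t \<omega>\<bar> > b/2} \<le> prob {\<omega>\<in>space M. \<bar>\<Sum>t\<in>T. V t \<omega>\<bar> \<ge> b/2}"
      by (intro finite_measure_mono) auto
    also have "\<dots> \<le> (\<integral>\<omega>. \<bar>\<Sum>t\<in>T. V t \<omega>\<bar> \<partial>M) / (b/2)"
      using b by (intro integral_Markov_inequality_measure[OF iA, of "space M"]) auto
    also have "\<dots> \<le> (\<integral>\<omega>. (\<Sum>t\<in>T. \<bar>V t \<omega>\<bar>) \<partial>M) / (b/2)"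
      using b iA iS by (intro divide_right_mono integral_mono) (auto intro: sum_abs)
    also have "(\<integral>\<omega>. (\<Sum>t\<in>T. \<bar>V t \<omega>\<bar>) \<partial>M) = (\<Sum>t\<in>T. \<integral>\<omega>. \<bar>V t \<omega>\<bar> \<partial>M)"
      by (rule Bochner_Integration.integral_sum) (rule Vint)
    also have "\<dots> \<le> real (card T) * (2 * (b powr (1-r) * C))"
      using V1 sum_mono[of T "\<lambda>t. \<integral>\<omega>. \<bar>V t \<omega>\<bar> \<partial>M" "\<lambda>_. 2 * (b powr (1-r) * C)"] by simp
    finally show ?thesis using b by (simp add: divide_right_mono)
  qed
  have sub: "{\<omega>\<in>space M. \<bar>\<Sum>t\<in>T. Y t \<omega>\<bar> > b} \<subseteq>
      {\<omega>\<in>space M. \<bar>\<Sum>t\<in>T. U t \<omega>\<bar> > b/2} \<union> {\<omega>\<in>space M. \<bar>\<Sum>t\<in>T. V t \<omega>\<bar> > b/2}"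
  proof safe
    fix \<omega> assume "\<omega> \<in> space M" "\<bar>\<Sum>t\<in>T. Y t \<omega>\<bar> > b" "\<not> \<bar>\<Sum>t\<in>T. V t \<omega>\<bar> > b/2"
    moreover have "(\<Sum>t\<in>T. Y t \<omega>) = (\<Sum>t\<in>T. U t \<omega>) + (\<Sum>t\<in>T. V t \<omega>)"
      by (simp add: YUV sum.distrib)
    ultimately show "\<bar>\<Sum>t\<in>T. U t \<omega>\<bar> > b/2" by linarith
  qed
  have "prob {\<omega>\<in>space M. \<bar>\<Sum>t\<in>T. Y t \<omega>\<bar> > b} \<le>
      prob ({\<omega>\<in>space M. \<bar>\<Sum>t\<in>T. U t \<omega>\<bar> > b/2} \<union> {\<omega>\<in>space M. \<bar>\<Sum>t\<in>T. V t \<omega>\<bar> > b/2})"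
    using sub by (intro finite_measure_mono) auto
  also have "\<dots> \<le> prob {\<omega>\<in>space M. \<bar>\<Sum>t\<in>T. U t \<omega>\<bar> > b/2} + prob {\<omega>\<in>space M. \<bar>\<Sum>t\<in>T. V t \<omega>\<bar> > b/2}"
    by (intro measure_Un_le) auto
  also have "\<dots> \<le> real (card T) * (b powr (2-r) * C) / (b/2)\<^sup>2 + real (card T) * (2 * (b powr (1-r) * C)) / (b/2)"
    using PU PV by simp
  also have "\<dots> = 8 * real (card T) * C / b powr r"
  proof -
    have e1: "b powr (2-r) = b\<^sup>2 / b powr r" using b by (simp add: powr_diff powr_numeral)
    have e2: "b powr (1-r) = b / b powr r" using b by (simp add: powr_diff)
    show ?thesis unfolding e1 e2 using b by (simp add: field_simps power2_eq_square)
  qed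
  finally show ?thesis .
qed

end


lemma sqrt_sum_sq_le: "finite I \<Longrightarrow> sqrt (\<Sum>i\<in>I. (u i)\<^sup>2) \<le> (\<Sum>i\<in>I. \<bar>u i :: real\<bar>)"
proof -
  assume I: "finite I"
  have "(\<Sum>i\<in>I. (u i)\<^sup>2) \<le> (\<Sum>i\<in>I. \<bar>u i\<bar>)\<^sup>2"
    using I
  proof (induction I rule: finite_induct)
    case empty then show ?case by simp
  next
    case (insert x F)
    have "(\<Sum>i\<in>insert x F. (u i)\<^sup>2) = (u x)\<^sup>2 + (\<Sum>i\<in>F. (u i)\<^sup>2)" using insert by simp
    also have "\<dots> \<le> (u x)\<^sup>2 + (\<Sum>i\<in>F. \<bar>u i\<bar>)\<^sup>2" using insert by simp
    also have "\<dots> \<le> (\<bar>u x\<bar> + (\<Sum>i\<in>F. \<bar>u i\<bar>))\<^sup>2"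
      by (simp add: power2_eq_square algebra_simps sum_nonneg)
    finally show ?case using insert by simp
  qed
  then have "sqrt (\<Sum>i\<in>I. (u i)\<^sup>2) \<le> sqrt ((\<Sum>i\<in>I. \<bar>u i\<bar>)\<^sup>2)" by (rule real_sqrt_le_mono)
  also have "\<dots> = (\<Sum>i\<in>I. \<bar>u i\<bar>)" by (simp add: sum_nonneg)
  finally show ?thesis .
qed

lemma spectral_norm_bound:
  assumes p: "p \<ge> 1"
  shows "spectral_norm p A \<le> (\<Sum>i=1..p. \<Sum>j=1..p. \<bar>A i j\<bar>)" and "0 \<le> spectral_norm p A"
proof -
  define S where "S = {sqrt (\<Sum>i=1..p. (\<Sum>j=1..p. A i j * x j)\<^sup>2) | x. (\<Sum>j=1..p. (x j)\<^sup>2) = 1}"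
  have sn: "spectral_norm p A = Sup S" unfolding spectral_norm_def S_def ..
  define e where "e j = (if j = 1 then 1 else (0::real))" for j :: nat
  have "(\<lambda>j. (e j)\<^sup>2) = (\<lambda>j. if j = 1 then 1 else 0)" by (auto simp: e_def fun_eq_iff)
  have e1: "(\<Sum>j=1..p. (e j)\<^sup>2) = 1"
  proof -
    have "(\<Sum>j=1..p. (e j)\<^sup>2) = (\<Sum>j=1..p. if j = 1 then 1 else 0)"
      by (intro sum.cong) (auto simp: e_def)
    also have "\<dots> = 1" using p by (simp add: sum.delta)
    finally show ?thesis .
  qed
  have eS: "sqrt (\<Sum>i=1..p. (\<Sum>j=1..p. A i j * e j)\<^sup>2) \<in> S" unfolding S_def using e1 by blast
  have ne: "S \<noteq> {}" using eS by auto
  have ub: "s \<le> (\<Sum>i=1..p. \<Sum>j=1..p. \<bar>A i j\<bar>)" if "s \<in> S" for s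
  proof -
    obtain x where x: "(\<Sum>j=1..p. (x j)\<^sup>2) = 1" and s: "s = sqrt (\<Sum>i=1..p. (\<Sum>j=1..p. A i j * x j)\<^sup>2)"
      using \<open>s \<in> S\<close> unfolding S_def by blast
    have xj: "\<bar>x j\<bar> \<le> 1" if "j \<in> {1..p}" for j
    proof -
      have "(x j)\<^sup>2 \<le> (\<Sum>j=1..p. (x j)\<^sup>2)"
        using that by (intro member_le_sum) auto
      then have "(x j)\<^sup>2 \<le> 1\<^sup>2" using x by simp
      then show ?thesis using abs_le_square_iff[of "x j" 1] by simp
    qed
    have "s \<le> (\<Sum>i=1..p. \<bar>\<Sum>j=1..p. A i j * x j\<bar>)" unfolding s by (rule sqrt_sum_sq_le) simp
    also have "\<dots> \<le> (\<Sum>i=1..p. \<Sum>j=1..p. \<bar>A i j\<bar>)"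
    proof (intro sum_mono)
      fix i assume "i \<in> {1..p}"
      have "\<bar>\<Sum>j=1..p. A i j * x j\<bar> \<le> (\<Sum>j=1..p. \<bar>A i j * x j\<bar>)" by (rule sum_abs)
      also have "\<dots> \<le> (\<Sum>j=1..p. \<bar>A i j\<bar>)"
      proof (intro sum_mono)
        fix j assume "j \<in> {1..p}"
        then show "\<bar>A i j * x j\<bar> \<le> \<bar>A i j\<bar>" using xj[of j]
          by (simp add: abs_mult mult_left_le)
      qed
      finally show "\<bar>\<Sum>j=1..p. A i j * x j\<bar> \<le> (\<Sum>j=1..p. \<bar>A i j\<bar>)" .
    qed
    finally show ?thesis .
  qed
  show "spectral_norm p A \<le> (\<Sum>i=1..p. \<Sum>j=1..p. \<bar>A i j\<bar>)"
    unfolding sn using ne ub by (intro cSup_least) auto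
  have bdd: "bdd_above S" using ub by (intro bdd_aboveI) auto
  have "0 \<le> sqrt (\<Sum>i=1..p. (\<Sum>j=1..p. A i j * e j)\<^sup>2)" by (simp add: sum_nonneg)
  also have "\<dots> \<le> Sup S" using eS bdd by (intro cSup_upper) auto
  finally show "0 \<le> spectral_norm p A" unfolding sn .
qed

lemma assembly:
  fixes X :: "nat \<Rightarrow> nat \<Rightarrow> 'a \<Rightarrow> real" and a :: "nat \<Rightarrow> real"
  assumes P: "prob_space M" and p: "p \<ge> 1"
    and top: "filterlim a at_top sequentially"
    and Sm: "\<And>i j n. i \<in> {1..p} \<Longrightarrow> j \<in> {1..p} \<Longrightarrow> i \<noteq> j \<Longrightarrow>
        (\<lambda>\<omega>. \<Sum>t=1..n. X i t \<omega> * X j t \<omega>) \<in> borel_measurable M"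
    and conv: "\<And>i j \<epsilon>. i \<in> {1..p} \<Longrightarrow> j \<in> {1..p} \<Longrightarrow> i \<noteq> j \<Longrightarrow> \<epsilon> > 0 \<Longrightarrow>
        (\<lambda>n. measure M {\<omega>\<in>space M. \<bar>\<Sum>t=1..n. X i t \<omega> * X j t \<omega>\<bar> > \<epsilon> * (a n)\<^sup>2}) \<longlonglongrightarrow> 0"
  shows "tendsto_in_prob_zero M
           (\<lambda>n \<omega>. spectral_norm p
                    (\<lambda>i j. if i = j then 0 else (\<Sum>t=1..n. X i t \<omega> * X j t \<omega>)) / (a n)\<^sup>2)"
  unfolding tendsto_in_prob_zero_def
proof (intro allI impI)
  interpret prob_space M by (rule P)
  fix \<epsilon> \<eta> :: real assume e: "\<epsilon> > 0" and h: "\<eta> > 0"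
  define PP where "PP = Set.filter (\<lambda>(i,j). i \<noteq> j) ({1..p} \<times> {1..p})"
  have PPf: "finite PP" unfolding PP_def by auto
  have cardPP: "card PP \<le> p * p"
  proof -
    have "card PP \<le> card ({1..p} \<times> {1..p})" unfolding PP_def by (intro card_mono) auto
    then show ?thesis by (simp add: card_cartesian_product)
  qed
  define e' where "e' = \<epsilon> / (real p * real p)"
  have e': "e' > 0" unfolding e'_def using e p by auto
  define h' where "h' = \<eta> / (real p * real p + 1)"
  have "real p * real p + 1 > 0" by (simp add: add_nonneg_pos)
  then have h': "h' > 0" unfolding h'_def using h by (intro divide_pos_pos)
  define B where "B n ij = {\<omega>\<in>space M. \<bar>\<Sum>t=1..n. X (fst ij) t \<omega> * X (snd ij) t \<omega>\<bar> > e' * (a n)\<^sup>2}" for n ij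
  have Bm: "B n ij \<in> sets M" if "ij \<in> PP" for n ij
  proof -
    obtain i j where ijd: "ij = (i,j)" by (cases ij)
    have ij: "ij = (i,j)" "i \<in> {1..p}" "j \<in> {1..p}" "i \<noteq> j"
      using that ijd unfolding PP_def by auto
    have Sij: "(\<lambda>\<omega>. \<Sum>t=1..n. X i t \<omega> * X j t \<omega>) \<in> borel_measurable M" using Sm ij by auto
    have "(\<lambda>\<omega>. \<bar>\<Sum>t=1..n. X i t \<omega> * X j t \<omega>\<bar>) \<in> borel_measurable M" using Sij by (rule borel_measurable_abs)
    then show ?thesis unfolding B_def ij fst_conv snd_conv by (intro borel_measurable_less borel_measurable_const)
  qed
  have evB: "eventually (\<lambda>n. \<forall>ij\<in>PP. measure M (B n ij) < h') sequentially"
  proof (rule eventually_ball_finite[OF PPf], rule ballI)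
    fix ij assume "ij \<in> PP"
    obtain i j where ijd: "ij = (i,j)" by (cases ij)
    have ij: "ij = (i,j)" "i \<in> {1..p}" "j \<in> {1..p}" "i \<noteq> j"
      using \<open>ij \<in> PP\<close> ijd unfolding PP_def by auto
    show "eventually (\<lambda>n. measure M (B n ij) < h') sequentially"
      using order_tendstoD(2)[OF conv[OF ij(2,3,4) e'] h'] unfolding B_def ij by simp
  qed
  have eva: "eventually (\<lambda>n. a n > 0) sequentially"
    using top unfolding filterlim_at_top_dense by auto
  show "eventually (\<lambda>n. \<exists>A\<in>sets M. {\<omega> \<in> space M. \<bar>spectral_norm p
                    (\<lambda>i j. if i = j then 0 else (\<Sum>t=1..n. X i t \<omega> * X j t \<omega>)) / (a n)\<^sup>2\<bar> > \<epsilon>} \<subseteq> A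
                    \<and> measure M A < \<eta>) sequentially"
    using evB eva
  proof eventually_elim
    case (elim n)
    define A where "A = (\<Union>ij\<in>PP. B n ij)"
    have Am: "A \<in> sets M" unfolding A_def using Bm PPf by auto
    have "measure M A \<le> (\<Sum>ij\<in>PP. measure M (B n ij))"
      unfolding A_def using PPf Bm by (intro measure_UNION_le) auto
    also have "\<dots> \<le> (\<Sum>ij\<in>PP. h')" using elim by (intro sum_mono) auto
    also have "\<dots> = real (card PP) * h'" by simp
    also have "\<dots> \<le> real p * real p * h'"
      using cardPP h' by (intro mult_right_mono) (auto simp flip: of_nat_mult)
    also have "\<dots> < \<eta>"
    proof -
      have d: "real p * real p + 1 > 0" by (simp add: add_nonneg_pos)
      have "real p * real p * \<eta> < (real p * real p + 1) * \<eta>" using h by simp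
      then show ?thesis unfolding h'_def using d by (simp add: field_simps)
    qed
    finally have mA: "measure M A < \<eta>" .
    have sub: "{\<omega> \<in> space M. \<bar>spectral_norm p
                    (\<lambda>i j. if i = j then 0 else (\<Sum>t=1..n. X i t \<omega> * X j t \<omega>)) / (a n)\<^sup>2\<bar> > \<epsilon>} \<subseteq> A"
    proof safe
      fix \<omega> assume \<omega>: "\<omega> \<in> space M"
        and big: "\<bar>spectral_norm p (\<lambda>i j. if i = j then 0 else (\<Sum>t=1..n. X i t \<omega> * X j t \<omega>)) / (a n)\<^sup>2\<bar> > \<epsilon>"
      define AA where "AA = (\<lambda>i j. if i = j then 0 else (\<Sum>t=1..n. X i t \<omega> * X j t \<omega>))"
      have an: "a n > 0" using elim by auto
      have sn0: "0 \<le> spectral_norm p AA" using spectral_norm_bound[OF p] by auto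
      have "spectral_norm p AA > \<epsilon> * (a n)\<^sup>2"
        using big sn0 an unfolding AA_def[symmetric] by (simp add: field_simps)
      show "\<omega> \<in> A"
      proof (rule ccontr)
        assume nA: "\<omega> \<notin> A"
        have "\<bar>AA i j\<bar> \<le> e' * (a n)\<^sup>2" if "i \<in> {1..p}" "j \<in> {1..p}" for i j
        proof (cases "i = j")
          case True then show ?thesis unfolding AA_def using e' by simp
        next
          case False
          then have "(i,j) \<in> PP" using that unfolding PP_def by auto
          then have "\<omega> \<notin> B n (i,j)" using nA unfolding A_def by auto
          then show ?thesis using \<omega> False unfolding B_def AA_def by auto
        qed
        then have "(\<Sum>i=1..p. \<Sum>j=1..p. \<bar>AA i j\<bar>) \<le> (\<Sum>i=1..p. \<Sum>j=1..p. e' * (a n)\<^sup>2)"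
          by (intro sum_mono) auto
        also have "\<dots> = \<epsilon> * (a n)\<^sup>2" unfolding e'_def using p by simp
        finally have "spectral_norm p AA \<le> \<epsilon> * (a n)\<^sup>2"
          using spectral_norm_bound(1)[OF p, of AA] by linarith
        then show False using \<open>spectral_norm p AA > \<epsilon> * (a n)\<^sup>2\<close> by linarith
      qed
    qed
    show ?case using Am sub mA by blast
  qed
qed



context prob_space
begin

lemma indep_vars_two:
  fixes Y :: "'i \<Rightarrow> 'a \<Rightarrow> real"
  assumes ind: "indep_vars (\<lambda>_. borel) Y I" and ab: "a \<in> I" "b \<in> I" "a \<noteq> b"
  shows "indep_var borel (Y a) borel (Y b)"
proof -
  have "indep_var (PiM {a} (\<lambda>_. borel)) (\<lambda>\<omega>. restrict (\<lambda>i. Y i \<omega>) {a})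
                  (PiM {b} (\<lambda>_. borel)) (\<lambda>\<omega>. restrict (\<lambda>i. Y i \<omega>) {b})"
    using ab by (intro indep_var_restrict[OF ind]) auto
  then have "indep_var borel ((\<lambda>f. f a) \<circ> (\<lambda>\<omega>. restrict (\<lambda>i. Y i \<omega>) {a}))
                       borel ((\<lambda>f. f b) \<circ> (\<lambda>\<omega>. restrict (\<lambda>i. Y i \<omega>) {b}))"
    by (rule indep_var_compose) auto
  then show ?thesis by (simp add: comp_def)
qed

lemma indep_vars_pairs:
  fixes Y :: "'i \<Rightarrow> 'a \<Rightarrow> real"
  assumes ind: "indep_vars (\<lambda>_. borel) Y I" and ab: "a1 \<in> I" "a2 \<in> I" "b1 \<in> I" "b2 \<in> I"
    and d: "{a1, a2} \<inter> {b1, b2} = {}"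
  shows "indep_var borel (\<lambda>\<omega>. Y a1 \<omega> * Y a2 \<omega>) borel (\<lambda>\<omega>. Y b1 \<omega> * Y b2 \<omega>)"
proof -
  have "indep_var (PiM {a1,a2} (\<lambda>_. borel)) (\<lambda>\<omega>. restrict (\<lambda>i. Y i \<omega>) {a1,a2})
                  (PiM {b1,b2} (\<lambda>_. borel)) (\<lambda>\<omega>. restrict (\<lambda>i. Y i \<omega>) {b1,b2})"
    using ab d by (intro indep_var_restrict[OF ind]) auto
  then have "indep_var borel ((\<lambda>f. f a1 * f a2) \<circ> (\<lambda>\<omega>. restrict (\<lambda>i. Y i \<omega>) {a1,a2}))
                       borel ((\<lambda>f. f b1 * f b2) \<circ> (\<lambda>\<omega>. restrict (\<lambda>i. Y i \<omega>) {b1,b2}))"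
  proof (rule indep_var_compose)
    show "(\<lambda>f. f a1 * f a2) \<in> borel_measurable (PiM {a1,a2} (\<lambda>_. (borel :: real measure)))"
      by (rule borel_measurable_times; rule measurable_component_singleton; simp)
    show "(\<lambda>f. f b1 * f b2) \<in> borel_measurable (PiM {b1,b2} (\<lambda>_. (borel :: real measure)))"
      by (rule borel_measurable_times; rule measurable_component_singleton; simp)
  qed
  then show ?thesis by (simp add: comp_def)
qed

lemma distr_transfer:
  fixes U V :: "'a \<Rightarrow> real" and g :: "real \<Rightarrow> real"
  assumes d: "distr M borel U = distr M borel V" and [measurable]: "U \<in> borel_measurable M" "V \<in> borel_measurable M"
    and g[measurable]: "g \<in> borel_measurable borel"
  shows "integrable M (\<lambda>\<omega>. g (U \<omega>)) \<longleftrightarrow> integrable M (\<lambda>\<omega>. g (V \<omega>))"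
    and "(\<integral>\<omega>. g (U \<omega>) \<partial>M) = (\<integral>\<omega>. g (V \<omega>) \<partial>M)"
proof -
  have "integrable M (\<lambda>\<omega>. g (U \<omega>)) \<longleftrightarrow> integrable (distr M borel U) g"
    by (rule integrable_distr_eq[where g=U and N=borel and f=g, symmetric]) auto
  also have "\<dots> \<longleftrightarrow> integrable M (\<lambda>\<omega>. g (V \<omega>))" unfolding d
    by (rule integrable_distr_eq[where g=V and N=borel and f=g]) auto
  finally show "integrable M (\<lambda>\<omega>. g (U \<omega>)) \<longleftrightarrow> integrable M (\<lambda>\<omega>. g (V \<omega>))" .
  have "(\<integral>\<omega>. g (U \<omega>) \<partial>M) = (\<integral>x. g x \<partial>distr M borel U)"
    by (rule integral_distr[where g=U and N=borel and f=g, symmetric]) auto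
  also have "\<dots> = (\<integral>\<omega>. g (V \<omega>) \<partial>M)" unfolding d
    by (rule integral_distr[where g=V and N=borel and f=g]) auto
  finally show "(\<integral>\<omega>. g (U \<omega>) \<partial>M) = (\<integral>\<omega>. g (V \<omega>) \<partial>M)" .
qed

end



lemma iid_case:
  fixes X :: "nat \<Rightarrow> nat \<Rightarrow> 'a \<Rightarrow> real" and a :: "nat \<Rightarrow> real"
  assumes P: "prob_space M" and iid: "iid_model M X"
    and lim: "(\<lambda>n. real n * measure M {\<omega>\<in>space M. \<bar>X 1 1 \<omega>\<bar> > a n}) \<longlonglongrightarrow> 1"
  shows iid_top: "filterlim a at_top sequentially"
    and iid_meas: "\<And>i j n. i \<ge> 1 \<Longrightarrow> j \<ge> 1 \<Longrightarrow> (\<lambda>\<omega>. \<Sum>t=1..n. X i t \<omega> * X j t \<omega>) \<in> borel_measurable M"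
    and iid_conv: "\<And>i j \<epsilon>. i \<ge> 1 \<Longrightarrow> j \<ge> 1 \<Longrightarrow> i \<noteq> j \<Longrightarrow> \<epsilon> > 0 \<Longrightarrow>
        (\<lambda>n. measure M {\<omega>\<in>space M. \<bar>\<Sum>t=1..n. X i t \<omega> * X j t \<omega>\<bar> > \<epsilon> * (a n)\<^sup>2}) \<longlonglongrightarrow> 0"
proof -
  interpret prob_space M by (rule P)
  obtain \<alpha> where \<alpha>: "0 < \<alpha>" "\<alpha> < 4" and rv: "regularly_varying M (X 1 1) \<alpha>"
    using iid unfolding iid_model_def by blast
  have mean: "integrable M (X 1 1) \<Longrightarrow> (\<integral>\<omega>. X 1 1 \<omega> \<partial>M) = 0" using iid unfolding iid_model_def by blast
  have iidf: "iid_field M X" using iid unfolding iid_model_def by blast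
  have ind: "indep_vars (\<lambda>_. borel) (\<lambda>(i, t). X i t) pos_idx"
    using iidf unfolding iid_field_def by blast
  have dist0: "\<forall>(i, t) \<in> pos_idx. distr M borel (X i t) = distr M borel (X 1 1)"
    using iidf unfolding iid_field_def by blast
  have dist: "distr M borel (X i t) = distr M borel (X 1 1)" if "i \<ge> 1" "t \<ge> 1" for i t
  proof -
    have "(i, t) \<in> pos_idx" using that unfolding pos_idx_def by simp
    then show ?thesis using dist0 by blast
  qed
  have rvs: "\<forall>k\<in>pos_idx. random_variable borel ((\<lambda>(i, t). X i t) k)"
    using ind unfolding indep_vars_def by blast
  have Xm[measurable]: "X i t \<in> borel_measurable M" if "i \<ge> 1" "t \<ge> 1" for i t
  proof -
    have "(i, t) \<in> pos_idx" using that unfolding pos_idx_def by simp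
    then show ?thesis using rvs by fastforce
  qed
  have X11[measurable]: "X 1 1 \<in> borel_measurable M" by (rule Xm) auto
  show meas: "(\<lambda>\<omega>. \<Sum>t=1..n. X i t \<omega> * X j t \<omega>) \<in> borel_measurable M" if "i \<ge> 1" "j \<ge> 1" for i j n
    using that by (intro borel_measurable_sum borel_measurable_times Xm) auto
  define r where "r = (if \<alpha> < 2 then min 1 (3*\<alpha>/4) else \<alpha>/4 + 1)"
  define \<beta> where "\<beta> = (\<alpha> + 2*r)/2"
  have r: "0 < r" "r < \<alpha>" "\<alpha> < 2*r" unfolding r_def using \<alpha> by auto
  have \<beta>: "\<alpha> < \<beta>" "\<beta> < 2*r" "0 < \<beta>" unfolding \<beta>_def using r \<alpha> by auto
  obtain c x0 where c: "c > 0" "x0 > 0" and low: "\<forall>x\<ge>x0. measure M {\<omega>\<in>space M. \<bar>X 1 1 \<omega>\<bar> > x} \<ge> c * x powr (-\<beta>)"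
    using tail_lower[OF P rv \<beta>(1) \<beta>(3)] by auto
  show top: "filterlim a at_top sequentially"
    by (rule growth_top[OF P X11 \<beta>(3) c low lim])
  have z: "(\<lambda>n. real n * a n powr (-2*r)) \<longlonglongrightarrow> 0"
    using growth_zero[OF P X11 \<beta>(3) c low lim, of "2*r"] \<beta> by simp
  have momr: "integrable M (\<lambda>\<omega>. \<bar>X 1 1 \<omega>\<bar> powr r)" by (rule rv_moment[OF P rv r(1) r(2)])
  define C0 where "C0 = (\<integral>\<omega>. \<bar>X 1 1 \<omega>\<bar> powr r \<partial>M)"
  have C0: "C0 \<ge> 0" unfolding C0_def by (intro integral_nonneg_AE) auto
  have absm: "(\<lambda>x::real. \<bar>x\<bar> powr r) \<in> borel_measurable borel" by measurable
  have momit: "integrable M (\<lambda>\<omega>. \<bar>X i t \<omega>\<bar> powr r) \<and> (\<integral>\<omega>. \<bar>X i t \<omega>\<bar> powr r \<partial>M) = C0"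
    if "i \<ge> 1" "t \<ge> 1" for i t
    using distr_transfer[OF dist[OF that] Xm[OF that] X11 absm] momr unfolding C0_def by simp
  have ind2: "indep_var borel (X i t) borel (X j t)" if "i \<ge> 1" "j \<ge> 1" "t \<ge> 1" "i \<noteq> j" for i j t
    using indep_vars_two[OF ind, of "(i,t)" "(j,t)"] that unfolding pos_idx_def by auto
  have Ymom: "integrable M (\<lambda>\<omega>. \<bar>X i t \<omega> * X j t \<omega>\<bar> powr r) \<and> (\<integral>\<omega>. \<bar>X i t \<omega> * X j t \<omega>\<bar> powr r \<partial>M) = C0 * C0"
    if ij: "i \<ge> 1" "j \<ge> 1" "t \<ge> 1" "i \<noteq> j" for i j t
  proof -
    have "indep_var borel ((\<lambda>x. \<bar>x\<bar> powr r) \<circ> X i t) borel ((\<lambda>x. \<bar>x\<bar> powr r) \<circ> X j t)"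
      by (rule indep_var_compose[OF ind2[OF ij] absm absm])
    then have iv: "indep_var borel (\<lambda>\<omega>. \<bar>X i t \<omega>\<bar> powr r) borel (\<lambda>\<omega>. \<bar>X j t \<omega>\<bar> powr r)"
      by (simp add: comp_def)
    have eq: "(\<lambda>\<omega>. \<bar>X i t \<omega> * X j t \<omega>\<bar> powr r) = (\<lambda>\<omega>. \<bar>X i t \<omega>\<bar> powr r * \<bar>X j t \<omega>\<bar> powr r)"
      by (simp add: abs_mult powr_mult)
    show ?thesis unfolding eq
      using indep_var_lebesgue_integral[OF iv] indep_var_integrable[OF iv] momit[of i t] momit[of j t] ij
      by simp
  qed
  define K where "K = 8 * (C0 * C0)"
  have bnd: "measure M {\<omega>\<in>space M. \<bar>\<Sum>t=1..n. X i t \<omega> * X j t \<omega>\<bar> > b} \<le> K * real n / b powr r"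
    if ij: "i \<ge> 1" "j \<ge> 1" "i \<noteq> j" and b: "b > 0" for i j n b
  proof (cases "\<alpha> < 2")
    case True
    then have r1: "r \<le> 1" unfolding r_def by simp
    have "measure M {\<omega>\<in>space M. \<bar>\<Sum>t\<in>{1..n}. X i t \<omega> * X j t \<omega>\<bar> > b} \<le> real (card {1..n}) * (C0 * C0) / b powr r"
      by (rule sub_bound[where Y="\<lambda>t \<omega>. X i t \<omega> * X j t \<omega>"]) (use ij b r r1 Ymom in \<open>auto intro: Xm\<close>)
    also have "\<dots> \<le> K * real n / b powr r"
      unfolding K_def using C0 b by (intro divide_right_mono) auto
    finally show ?thesis by simp
  next
    case False
    then have r12: "1 \<le> r" "r \<le> 2" unfolding r_def using \<alpha> by auto
    have int1: "integrable M (X 1 1)"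
    proof -
      have "integrable M (\<lambda>\<omega>. \<bar>X 1 1 \<omega>\<bar> powr 1)" by (rule rv_moment[OF P rv]) (use False in auto)
      then have "integrable M (\<lambda>\<omega>. \<bar>X 1 1 \<omega>\<bar>)" by simp
      then show ?thesis by (simp add: integrable_abs_iff)
    qed
    have idm: "(\<lambda>x::real. x) \<in> borel_measurable borel" by simp
    have intit: "integrable M (X i t) \<and> (\<integral>\<omega>. X i t \<omega> \<partial>M) = 0" if "i \<ge> 1" "t \<ge> 1" for i t
      using distr_transfer[OF dist[OF that] Xm[OF that] X11 idm] int1 mean by simp
    have "measure M {\<omega>\<in>space M. \<bar>\<Sum>t\<in>{1..n}. X i t \<omega> * X j t \<omega>\<bar> > b} \<le> 8 * real (card {1..n}) * (C0 * C0) / b powr r"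
    proof (rule tr_bound[where Y="\<lambda>t \<omega>. X i t \<omega> * X j t \<omega>"])
      show "finite {1..n}" by simp
      show "1 \<le> r" "r \<le> 2" "0 < b" by (fact r12(1), fact r12(2), fact b)
      fix t assume t: "t \<in> {1..n}"
      then have t1: "t \<ge> 1" by simp
      show "(\<lambda>\<omega>. X i t \<omega> * X j t \<omega>) \<in> borel_measurable M" using ij t1 by (intro borel_measurable_times Xm) auto
      show "integrable M (\<lambda>\<omega>. \<bar>X i t \<omega> * X j t \<omega>\<bar> powr r)" using Ymom ij t1 by auto
      show "(\<integral>\<omega>. \<bar>X i t \<omega> * X j t \<omega>\<bar> powr r \<partial>M) \<le> C0 * C0" using Ymom ij t1 by auto
      show "integrable M (\<lambda>\<omega>. X i t \<omega> * X j t \<omega>)"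
        using indep_var_integrable[OF ind2[OF ij(1,2) t1 ij(3)]] intit[of i t] intit[of j t] ij t1 by auto
      show "(\<integral>\<omega>. X i t \<omega> * X j t \<omega> \<partial>M) = 0"
        using indep_var_lebesgue_integral[OF ind2[OF ij(1,2) t1 ij(3)]] intit[of i t] intit[of j t] ij t1 by auto
    next
      fix t s assume ts: "t \<in> {1..n}" "s \<in> {1..n}" "t \<noteq> s"
      show "indep_var borel (\<lambda>\<omega>. X i t \<omega> * X j t \<omega>) borel (\<lambda>\<omega>. X i s \<omega> * X j s \<omega>)"
        using indep_vars_pairs[OF ind, of "(i,t)" "(j,t)" "(i,s)" "(j,s)"] ij ts unfolding pos_idx_def by auto
    qed
    then show ?thesis unfolding K_def by (simp add: ac_simps)
  qed
  show "(\<lambda>n. measure M {\<omega>\<in>space M. \<bar>\<Sum>t=1..n. X i t \<omega> * X j t \<omega>\<bar> > \<epsilon> * (a n)\<^sup>2}) \<longlonglongrightarrow> 0"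
    if "i \<ge> 1" "j \<ge> 1" "i \<noteq> j" "\<epsilon> > 0" for i j \<epsilon>
    by (rule conv_from_bound[OF _ r(1) top z \<open>\<epsilon> > 0\<close>]) (rule bnd, use that in auto)
qed



definition fieldmap :: "(nat \<Rightarrow> nat \<Rightarrow> 'a \<Rightarrow> real) \<Rightarrow> 'a \<Rightarrow> (nat \<times> nat \<Rightarrow> real)" where
  "fieldmap Y = (\<lambda>\<omega> (i, t). Y (Suc i) (Suc t) \<omega>)"

lemma fieldmap_measurable:
  assumes "\<And>i t. i \<ge> 1 \<Longrightarrow> t \<ge> 1 \<Longrightarrow> Y i t \<in> borel_measurable M"
  shows "fieldmap Y \<in> measurable M (PiM UNIV (\<lambda>_. borel))"
proof -
  have [measurable]: "Y (Suc i) (Suc t) \<in> borel_measurable M" for i t using assms by auto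
  have "(\<lambda>\<omega>. fieldmap Y \<omega> k) \<in> borel_measurable M" for k
    by (cases k) (simp add: fieldmap_def)
  then show ?thesis by (intro measurable_PiM_single') (auto simp: fieldmap_def)
qed

lemma field_shift_measurable:
  "field_shift a b \<in> measurable (PiM UNIV (\<lambda>_::nat\<times>nat. (borel :: real measure))) (PiM UNIV (\<lambda>_. borel))"
proof -
  have "(\<lambda>f. field_shift a b f k) \<in> borel_measurable (PiM UNIV (\<lambda>_::nat\<times>nat. (borel :: real measure)))" for k
    by (cases k) (simp add: field_shift_def)
  then show ?thesis by (intro measurable_PiM_single') (auto simp: field_shift_def)
qed

lemma stationary_distr:
  assumes st: "strictly_stationary_field M \<sigma>" and it: "i \<ge> 1" "t \<ge> 1"
  shows "distr M borel (\<sigma> i t) = distr M borel (\<sigma> 1 1)"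
proof -
  have sm: "\<And>i t. i \<ge> 1 \<Longrightarrow> t \<ge> 1 \<Longrightarrow> \<sigma> i t \<in> borel_measurable M"
    using st unfolding strictly_stationary_field_def by blast
  have FL: "field_law M \<sigma> = distr M (PiM UNIV (\<lambda>_. borel)) (fieldmap \<sigma>)"
    unfolding field_law_def fieldmap_def ..
  have fm: "fieldmap \<sigma> \<in> measurable M (PiM UNIV (\<lambda>_. borel))" by (rule fieldmap_measurable[OF sm])
  have ev: "(\<lambda>f. f k) \<in> borel_measurable (PiM UNIV (\<lambda>_::nat\<times>nat. (borel :: real measure)))" for k
    by (rule measurable_component_singleton) simp
  have shift: "distr (field_law M \<sigma>) (PiM UNIV (\<lambda>_. borel)) (field_shift a b) = field_law M \<sigma>" for a b
    using st unfolding strictly_stationary_field_def by blast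
  have gen: "distr M borel (\<sigma> (Suc a) (Suc b)) = distr (field_law M \<sigma>) borel (\<lambda>f. f (a, b))" for a b
  proof -
    have "distr (field_law M \<sigma>) borel (\<lambda>f. f (a, b)) = distr M borel ((\<lambda>f. f (a, b)) \<circ> fieldmap \<sigma>)"
      unfolding FL by (rule distr_distr[OF ev fm])
    also have "(\<lambda>f. f (a, b)) \<circ> fieldmap \<sigma> = \<sigma> (Suc a) (Suc b)"
      by (simp add: fun_eq_iff fieldmap_def)
    finally show ?thesis by simp
  qed
  obtain a b where ab: "i = Suc a" "t = Suc b" using it by (metis Suc_pred' less_eq_Suc_le One_nat_def)
  have "distr M borel (\<sigma> i t) = distr (field_law M \<sigma>) borel (\<lambda>f. f (a, b))" unfolding ab by (rule gen)
  also have "\<dots> = distr (field_law M \<sigma>) borel ((\<lambda>f. f (0, 0)) \<circ> field_shift a b)"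
    by (simp add: comp_def field_shift_def)
  also have "\<dots> = distr (distr (field_law M \<sigma>) (PiM UNIV (\<lambda>_. borel)) (field_shift a b)) borel (\<lambda>f. f (0, 0))"
    by (rule distr_distr[symmetric]) (auto intro: ev field_shift_measurable simp: field_law_def)
  also have "\<dots> = distr (field_law M \<sigma>) borel (\<lambda>f. f (0, 0))" by (simp only: shift)
  also have "\<dots> = distr M borel (\<sigma> 1 1)" using gen[of 0 0] by simp
  finally show ?thesis .
qed



lemma sv_tail:
  fixes W S V :: "'a \<Rightarrow> real" and a :: "nat \<Rightarrow> real"
  assumes P: "prob_space M" and WSV: "\<And>\<omega>. W \<omega> = S \<omega> * V \<omega>"
    and Sm[measurable]: "S \<in> borel_measurable M" and Vm[measurable]: "V \<in> borel_measurable M"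
    and Snn: "\<And>\<omega>. \<omega> \<in> space M \<Longrightarrow> S \<omega> \<ge> 0"
    and ind: "prob_space.indep_var M borel V borel S"
    and rv: "regularly_varying M V \<alpha>" and \<beta>: "\<beta> > \<alpha>" "\<beta> > 0"
    and lim: "(\<lambda>n. real n * measure M {\<omega>\<in>space M. \<bar>W \<omega>\<bar> > a n}) \<longlonglongrightarrow> 1"
  shows "\<exists>c>0. \<exists>x0>0. \<forall>x\<ge>x0. measure M {\<omega>\<in>space M. \<bar>W \<omega>\<bar> > x} \<ge> c * x powr (-\<beta>)"
proof -
  interpret prob_space M by (rule P)
  have Wm[measurable]: "W \<in> borel_measurable M"
  proof -
    have "W = (\<lambda>\<omega>. S \<omega> * V \<omega>)" using WSV by auto
    then show ?thesis by simp
  qed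
  have "\<exists>s>0. prob {\<omega>\<in>space M. S \<omega> > s} > 0"
  proof (rule ccontr)
    assume nex: "\<not> (\<exists>s>0. prob {\<omega>\<in>space M. S \<omega> > s} > 0)"
    have z: "prob {\<omega>\<in>space M. S \<omega> > s} = 0" if "s > 0" for s
    proof -
      have "\<not> prob {\<omega>\<in>space M. S \<omega> > s} > 0" using nex that by blast
      then show ?thesis using measure_nonneg[of M "{\<omega>\<in>space M. S \<omega> > s}"] by linarith
    qed
    have "AE \<omega> in M. \<forall>k::nat. \<not> S \<omega> > inverse (real (Suc k))"
    proof (subst AE_all_countable, intro allI)
      fix k :: nat
      have "{\<omega>\<in>space M. S \<omega> > inverse (real (Suc k))} \<in> null_sets M"
        using z[of "inverse (real (Suc k))"] by (auto simp: emeasure_eq_measure null_sets_def)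
      from AE_not_in[OF this] show "AE \<omega> in M. \<not> S \<omega> > inverse (real (Suc k))"
        by (rule AE_mp) (intro AE_I2, auto)
    qed
    then have AEW: "AE \<omega> in M. W \<omega> = 0"
    proof (rule AE_mp, intro AE_I2 impI)
      fix \<omega> assume \<omega>: "\<omega> \<in> space M" and h: "\<forall>k::nat. \<not> S \<omega> > inverse (real (Suc k))"
      have "S \<omega> = 0"
      proof (rule ccontr)
        assume "S \<omega> \<noteq> 0"
        then have "S \<omega> > 0" using Snn[OF \<omega>] by auto
        then obtain n where n: "n > 0" "inverse (real n) < S \<omega>" using ex_inverse_of_nat_less by blast
        then obtain k where "n = Suc k" using gr0_conv_Suc by auto
        then show False using h n by auto
      qed
      then show "W \<omega> = 0" using WSV by simp
    qed
    have pv: "real n * prob {\<omega>\<in>space M. \<bar>W \<omega>\<bar> > a n} = (if a n < 0 then real n else 0)" for n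
    proof -
      have "prob {\<omega>\<in>space M. \<bar>W \<omega>\<bar> > a n} = prob {\<omega>\<in>space M. 0 > a n}"
      proof (rule finite_measure_eq_AE)
        show "AE \<omega> in M. (\<omega> \<in> {\<omega>\<in>space M. \<bar>W \<omega>\<bar> > a n}) = (\<omega> \<in> {\<omega>\<in>space M. 0 > a n})"
          using AEW by (rule AE_mp) (intro AE_I2, auto)
      qed auto
      also have "\<dots> = (if a n < 0 then 1 else 0)" by (auto simp: prob_space)
      finally show ?thesis by simp
    qed
    have "eventually (\<lambda>n. real n * prob {\<omega>\<in>space M. \<bar>W \<omega>\<bar> > a n} \<in> {1/2 <..< 3/2}) sequentially"
      using lim by (rule topological_tendstoD) auto
    moreover have "eventually (\<lambda>n. n \<ge> 2) sequentially" by (rule eventually_ge_at_top)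
    ultimately have "eventually (\<lambda>n. False) sequentially"
    proof eventually_elim
      case (elim n) then show ?case unfolding pv by (auto split: if_splits)
    qed
    then show False by simp
  qed
  then obtain s where s: "s > 0" "prob {\<omega>\<in>space M. S \<omega> > s} > 0" by blast
  obtain c x0 where c: "c > 0" "x0 > 0" and low: "\<forall>x\<ge>x0. prob {\<omega>\<in>space M. \<bar>V \<omega>\<bar> > x} \<ge> c * x powr (-\<beta>)"
    using tail_lower[OF P rv \<beta>] by auto
  define ps where "ps = prob {\<omega>\<in>space M. S \<omega> > s}"
  have "\<forall>x\<ge>s * x0. prob {\<omega>\<in>space M. \<bar>W \<omega>\<bar> > x} \<ge> (ps * c * s powr \<beta>) * x powr (-\<beta>)"
  proof (intro allI impI)
    fix x assume x: "x \<ge> s * x0"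
    have xs: "x / s \<ge> x0" using x s by (simp add: field_simps)
    have xp: "x > 0" using x s c by (smt (verit) mult_pos_pos)
    have "prob ((\<lambda>\<omega>. (V \<omega>, S \<omega>)) -` ({y. \<bar>y\<bar> > x / s} \<times> {y. y > s}) \<inter> space M)
        = prob (V -` {y. \<bar>y\<bar> > x / s} \<inter> space M) * prob (S -` {y. y > s} \<inter> space M)"
      by (rule indep_varD[OF ind]) auto
    also have "V -` {y. \<bar>y\<bar> > x / s} \<inter> space M = {\<omega>\<in>space M. \<bar>V \<omega>\<bar> > x / s}" by auto
    also have "S -` {y. y > s} \<inter> space M = {\<omega>\<in>space M. S \<omega> > s}" by auto
    finally have eq: "prob ((\<lambda>\<omega>. (V \<omega>, S \<omega>)) -` ({y. \<bar>y\<bar> > x / s} \<times> {y. y > s}) \<inter> space M)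
        = prob {\<omega>\<in>space M. \<bar>V \<omega>\<bar> > x / s} * ps" unfolding ps_def .
    have "(ps * c * s powr \<beta>) * x powr (-\<beta>) = ps * (c * (x / s) powr (-\<beta>))"
      using s xp by (simp add: powr_divide powr_minus field_simps)
    also have "\<dots> \<le> ps * prob {\<omega>\<in>space M. \<bar>V \<omega>\<bar> > x / s}"
      using low xs s unfolding ps_def by (intro mult_left_mono) auto
    also have "\<dots> = prob ((\<lambda>\<omega>. (V \<omega>, S \<omega>)) -` ({y. \<bar>y\<bar> > x / s} \<times> {y. y > s}) \<inter> space M)"
      using eq by simp
    also have "\<dots> \<le> prob {\<omega>\<in>space M. \<bar>W \<omega>\<bar> > x}"
    proof (rule finite_measure_mono)
      show "{\<omega>\<in>space M. \<bar>W \<omega>\<bar> > x} \<in> sets M" by measurable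
      show "(\<lambda>\<omega>. (V \<omega>, S \<omega>)) -` ({y. \<bar>y\<bar> > x / s} \<times> {y. y > s}) \<inter> space M \<subseteq> {\<omega>\<in>space M. \<bar>W \<omega>\<bar> > x}"
      proof safe
        fix \<omega> assume \<omega>: "\<omega> \<in> space M" "\<bar>V \<omega>\<bar> > x / s" "S \<omega> > s"
        have "x = s * (x / s)" using s by simp
        also have "\<dots> < S \<omega> * \<bar>V \<omega>\<bar>" using \<omega> s xp
          by (intro mult_strict_mono) auto
        also have "\<dots> = \<bar>W \<omega>\<bar>" using WSV[of \<omega>] Snn[OF \<omega>(1)] by (simp add: abs_mult)
        finally show "x < \<bar>W \<omega>\<bar>" .
      qed
    qed
    finally show "prob {\<omega>\<in>space M. \<bar>W \<omega>\<bar> > x} \<ge> (ps * c * s powr \<beta>) * x powr (-\<beta>)" .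
  qed
  moreover have "ps * c * s powr \<beta> > 0" using s c unfolding ps_def by simp
  moreover have "s * x0 > 0" using s c by simp
  ultimately show ?thesis by blast
qed



lemma sv_case:
  fixes X :: "nat \<Rightarrow> nat \<Rightarrow> 'a \<Rightarrow> real" and a :: "nat \<Rightarrow> real"
  assumes P: "prob_space M" and sv: "sv_model M p X"
    and lim: "(\<lambda>n. real n * measure M {\<omega>\<in>space M. \<bar>X 1 1 \<omega>\<bar> > a n}) \<longlonglongrightarrow> 1"
  shows sv_top: "filterlim a at_top sequentially"
    and sv_meas: "\<And>i j n. i \<ge> 1 \<Longrightarrow> j \<ge> 1 \<Longrightarrow> (\<lambda>\<omega>. \<Sum>t=1..n. X i t \<omega> * X j t \<omega>) \<in> borel_measurable M"
    and sv_conv: "\<And>i j \<epsilon>. i \<ge> 1 \<Longrightarrow> j \<ge> 1 \<Longrightarrow> i \<noteq> j \<Longrightarrow> \<epsilon> > 0 \<Longrightarrow>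
        (\<lambda>n. measure M {\<omega>\<in>space M. \<bar>\<Sum>t=1..n. X i t \<omega> * X j t \<omega>\<bar> > \<epsilon> * (a n)\<^sup>2}) \<longlonglongrightarrow> 0"
proof -
  interpret prob_space M by (rule P)
  obtain \<sigma> Z where Xd: "\<And>i t \<omega>. X i t \<omega> = \<sigma> i t \<omega> * Z i t \<omega>"
    and iidZ: "iid_field M Z" and st: "strictly_stationary_field M \<sigma>"
    and snn: "\<And>i t \<omega>. i \<ge> 1 \<Longrightarrow> t \<ge> 1 \<Longrightarrow> \<omega> \<in> space M \<Longrightarrow> \<sigma> i t \<omega> \<ge> 0"
    and indF0: "indep_var (Pi\<^sub>M UNIV (\<lambda>_. borel)) (\<lambda>\<omega> (i, t). Z (Suc i) (Suc t) \<omega>)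
          (Pi\<^sub>M UNIV (\<lambda>_. borel)) (\<lambda>\<omega> (i, t). \<sigma> (Suc i) (Suc t) \<omega>)"
    and meanZ: "integrable M (Z 1 1) \<Longrightarrow> integral\<^sup>L M (Z 1 1) = 0"
    and rest: "\<exists>\<alpha>. 0 < \<alpha> \<and> \<alpha> < 4 \<and> \<alpha> \<noteq> 2 \<and> regularly_varying M (Z 1 1) \<alpha> \<and>
          (\<exists>\<delta> > 0. (\<exists>\<alpha>h. strongly_mixing_rate M \<sigma> p \<alpha>h \<and>
                          summable (\<lambda>h. \<alpha>h (Suc h) powr (\<delta> / (2 + \<delta>)))) \<and>
             (\<exists>\<epsilon> > 0. integrable M (\<lambda>\<omega>. \<sigma> 1 1 \<omega> powr (2 * max (2 + \<delta>) (\<alpha> + \<epsilon>)))))"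
    using sv unfolding sv_model_def by metis
  obtain \<alpha> \<delta> \<epsilon>0 where \<alpha>: "0 < \<alpha>" "\<alpha> < 4" "\<alpha> \<noteq> 2" and rv: "regularly_varying M (Z 1 1) \<alpha>"
    and \<delta>: "\<delta> > 0" and \<epsilon>0: "\<epsilon>0 > 0"
    and intQ0: "integrable M (\<lambda>\<omega>. \<sigma> 1 1 \<omega> powr (2 * max (2 + \<delta>) (\<alpha> + \<epsilon>0)))"
    using rest by metis
  define Q where "Q = 2 * max (2 + \<delta>) (\<alpha> + \<epsilon>0)"
  have Q4: "Q \<ge> 4" unfolding Q_def using \<delta> by auto
  have Xeq: "X i t = (\<lambda>\<omega>. \<sigma> i t \<omega> * Z i t \<omega>)" for i t using Xd by auto
  have indZ: "indep_vars (\<lambda>_. borel) (\<lambda>(i, t). Z i t) pos_idx"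
    using iidZ unfolding iid_field_def by blast
  have dist0: "\<forall>(i, t) \<in> pos_idx. distr M borel (Z i t) = distr M borel (Z 1 1)"
    using iidZ unfolding iid_field_def by blast
  have dZ: "distr M borel (Z i t) = distr M borel (Z 1 1)" if "i \<ge> 1" "t \<ge> 1" for i t
  proof -
    have "(i, t) \<in> pos_idx" using that unfolding pos_idx_def by simp
    then show ?thesis using dist0 by blast
  qed
  have rvs: "\<forall>k\<in>pos_idx. random_variable borel ((\<lambda>(i, t). Z i t) k)"
    using indZ unfolding indep_vars_def by blast
  have Zm[measurable]: "Z i t \<in> borel_measurable M" if "i \<ge> 1" "t \<ge> 1" for i t
  proof -
    have "(i, t) \<in> pos_idx" using that unfolding pos_idx_def by simp
    then show ?thesis using rvs by fastforce
  qed
  have Z11[measurable]: "Z 1 1 \<in> borel_measurable M" by (rule Zm) auto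
  have indZ2: "indep_var borel (Z i t) borel (Z j t)" if "i \<ge> 1" "j \<ge> 1" "t \<ge> 1" "i \<noteq> j" for i j t
    using indep_vars_two[OF indZ, of "(i,t)" "(j,t)"] that unfolding pos_idx_def by auto
  have \<sigma>m[measurable]: "\<sigma> i t \<in> borel_measurable M" if "i \<ge> 1" "t \<ge> 1" for i t
    using st that unfolding strictly_stationary_field_def by blast
  have \<sigma>11[measurable]: "\<sigma> 1 1 \<in> borel_measurable M" by (rule \<sigma>m) auto
  have d\<sigma>: "distr M borel (\<sigma> i t) = distr M borel (\<sigma> 1 1)" if "i \<ge> 1" "t \<ge> 1" for i t
    by (rule stationary_distr[OF st that])
  have Xm[measurable]: "X i t \<in> borel_measurable M" if "i \<ge> 1" "t \<ge> 1" for i t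
    unfolding Xeq using that by (intro borel_measurable_times \<sigma>m Zm)
  have X11[measurable]: "X 1 1 \<in> borel_measurable M" by (rule Xm) auto
  show meas: "(\<lambda>\<omega>. \<Sum>t=1..n. X i t \<omega> * X j t \<omega>) \<in> borel_measurable M" if "i \<ge> 1" "j \<ge> 1" for i j n
    using that by (intro borel_measurable_sum borel_measurable_times Xm) auto
  have indF: "indep_var (Pi\<^sub>M UNIV (\<lambda>_. borel)) (fieldmap Z) (Pi\<^sub>M UNIV (\<lambda>_. borel)) (fieldmap \<sigma>)"
    using indF0 unfolding fieldmap_def .
  have FI: "indep_var borel (\<lambda>\<omega>. F (fieldmap Z \<omega>)) borel (\<lambda>\<omega>. G (fieldmap \<sigma> \<omega>))"
    if "F \<in> borel_measurable (Pi\<^sub>M UNIV (\<lambda>_::nat\<times>nat. (borel :: real measure)))"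
       "G \<in> borel_measurable (Pi\<^sub>M UNIV (\<lambda>_::nat\<times>nat. (borel :: real measure)))" for F G :: "(nat \<times> nat \<Rightarrow> real) \<Rightarrow> real"
    using indep_var_compose[OF indF that] by (simp add: comp_def)
  have fm: "fieldmap Y \<omega> (i - 1, t - 1) = Y i t \<omega>" if "i \<ge> 1" "t \<ge> 1" for Y :: "nat \<Rightarrow> nat \<Rightarrow> 'a \<Rightarrow> real" and i t \<omega>
    using that by (simp add: fieldmap_def)
  have ev: "(\<lambda>f. f k) \<in> borel_measurable (Pi\<^sub>M UNIV (\<lambda>_::nat\<times>nat. (borel :: real measure)))" for k
    by (rule measurable_component_singleton) simp
  have int\<sigma>11: "integrable M (\<lambda>\<omega>. \<bar>\<sigma> 1 1 \<omega>\<bar> powr q)" if q: "0 < q" "q \<le> Q" for q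
  proof (rule Bochner_Integration.integrable_bound[where f="\<lambda>\<omega>. 1 + \<sigma> 1 1 \<omega> powr Q"])
    show "integrable M (\<lambda>\<omega>. 1 + \<sigma> 1 1 \<omega> powr Q)" using intQ0 unfolding Q_def by auto
    show "(\<lambda>\<omega>. \<bar>\<sigma> 1 1 \<omega>\<bar> powr q) \<in> borel_measurable M" by measurable
    show "AE x in M. norm (\<bar>\<sigma> 1 1 x\<bar> powr q) \<le> norm (1 + \<sigma> 1 1 x powr Q)"
    proof (rule AE_I2)
      fix x assume x: "x \<in> space M"
      have s0: "\<sigma> 1 1 x \<ge> 0" using snn[of 1 1 x] x by simp
      have "\<sigma> 1 1 x powr q \<le> 1 + \<sigma> 1 1 x powr Q"
      proof (cases "\<sigma> 1 1 x \<le> 1")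
        case True
        then have "\<sigma> 1 1 x powr q \<le> 1 powr q" using s0 q by (intro powr_mono2) auto
        then have "\<sigma> 1 1 x powr q \<le> 1" by simp
        then show ?thesis by (smt (verit) powr_ge_zero)
      next
        case False
        then have "\<sigma> 1 1 x powr q \<le> \<sigma> 1 1 x powr Q" using q by (intro powr_mono) auto
        then show ?thesis by simp
      qed
      then show "norm (\<bar>\<sigma> 1 1 x\<bar> powr q) \<le> norm (1 + \<sigma> 1 1 x powr Q)" using s0 by simp
    qed
  qed
  have mom\<sigma>: "integrable M (\<lambda>\<omega>. \<bar>\<sigma> i t \<omega>\<bar> powr q) \<and> (\<integral>\<omega>. \<bar>\<sigma> i t \<omega>\<bar> powr q \<partial>M) = (\<integral>\<omega>. \<bar>\<sigma> 1 1 \<omega>\<bar> powr q \<partial>M)"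
    if "0 < q" "q \<le> Q" "i \<ge> 1" "t \<ge> 1" for q i t
  proof -
    have g: "(\<lambda>x::real. \<bar>x\<bar> powr q) \<in> borel_measurable borel" by measurable
    show ?thesis using distr_transfer[OF d\<sigma>[OF that(3,4)] \<sigma>m[OF that(3,4)] \<sigma>11 g] int\<sigma>11[OF that(1,2)] by simp
  qed
  have momZ: "integrable M (\<lambda>\<omega>. \<bar>Z i t \<omega>\<bar> powr q) \<and> (\<integral>\<omega>. \<bar>Z i t \<omega>\<bar> powr q \<partial>M) = (\<integral>\<omega>. \<bar>Z 1 1 \<omega>\<bar> powr q \<partial>M)"
    if "0 < q" "q < \<alpha>" "i \<ge> 1" "t \<ge> 1" for q i t
  proof -
    have g: "(\<lambda>x::real. \<bar>x\<bar> powr q) \<in> borel_measurable borel" by measurable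
    show ?thesis using distr_transfer[OF dZ[OF that(3,4)] Zm[OF that(3,4)] Z11 g] rv_moment[OF P rv that(1,2)] by simp
  qed
  have ind11: "indep_var borel (Z 1 1) borel (\<sigma> 1 1)"
    using FI[OF ev[of "(0,0)"] ev[of "(0,0)"]] by (simp add: fieldmap_def)
  have tl: "\<exists>c>0. \<exists>x0>0. \<forall>x\<ge>x0. measure M {\<omega>\<in>space M. \<bar>X 1 1 \<omega>\<bar> > x} \<ge> c * x powr (-\<beta>)"
    if "\<beta> > \<alpha>" for \<beta>
    by (rule sv_tail[OF P _ \<sigma>11 Z11 _ ind11 rv that _ lim]) (use Xd snn that \<alpha> in auto)
  obtain c1 x1 where c1: "c1 > 0" "x1 > 0" and low1: "\<forall>x\<ge>x1. measure M {\<omega>\<in>space M. \<bar>X 1 1 \<omega>\<bar> > x} \<ge> c1 * x powr (-(\<alpha>+1))"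
    using tl[of "\<alpha>+1"] by auto
  show top: "filterlim a at_top sequentially"
    by (rule growth_top[OF P X11 _ c1 low1 lim]) (use \<alpha> in auto)
  have zz: "(\<lambda>n. real n * a n powr (-2*g)) \<longlonglongrightarrow> 0" if "\<alpha> < 2*g" for g
  proof -
    define \<beta> where "\<beta> = (\<alpha> + 2*g)/2"
    have \<beta>: "\<alpha> < \<beta>" "\<beta> < 2*g" "0 < \<beta>" unfolding \<beta>_def using that \<alpha> by auto
    obtain c x0 where c: "c > 0" "x0 > 0" and low: "\<forall>x\<ge>x0. measure M {\<omega>\<in>space M. \<bar>X 1 1 \<omega>\<bar> > x} \<ge> c * x powr (-\<beta>)"
      using tl[OF \<beta>(1)] by auto
    show ?thesis using growth_zero[OF P X11 \<beta>(3) c low lim, of "2*g"] \<beta> by simp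
  qed
  show "(\<lambda>n. measure M {\<omega>\<in>space M. \<bar>\<Sum>t=1..n. X i t \<omega> * X j t \<omega>\<bar> > \<epsilon> * (a n)\<^sup>2}) \<longlonglongrightarrow> 0"
    if ij: "i \<ge> 1" "j \<ge> 1" "i \<noteq> j" and e: "\<epsilon> > 0" for i j \<epsilon>
  proof (cases "\<alpha> < 2")
    case True
    define r where "r = min 1 (3*\<alpha>/4)"
    have r: "0 < r" "r \<le> 1" "r < \<alpha>" "\<alpha> < 2*r" "2*r \<le> Q" unfolding r_def using \<alpha> True Q4 by auto
    define C0 where "C0 = (\<integral>\<omega>. \<bar>Z 1 1 \<omega>\<bar> powr r \<partial>M)"
    define D where "D = (\<integral>\<omega>. \<bar>\<sigma> 1 1 \<omega>\<bar> powr (2*r) \<partial>M)"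
    have C0: "C0 \<ge> 0" unfolding C0_def by (intro integral_nonneg_AE) auto
    have absm: "(\<lambda>x::real. \<bar>x\<bar> powr r) \<in> borel_measurable borel" by measurable
    have Yb: "integrable M (\<lambda>\<omega>. \<bar>X i t \<omega> * X j t \<omega>\<bar> powr r) \<and> (\<integral>\<omega>. \<bar>X i t \<omega> * X j t \<omega>\<bar> powr r \<partial>M) \<le> D * (C0 * C0)"
      if t: "t \<ge> 1" for t
    proof -
      define F where "F f = \<bar>f (i-1,t-1)\<bar> powr r * \<bar>f (j-1,t-1)\<bar> powr r" for f :: "nat \<times> nat \<Rightarrow> real"
      define G where "G f = \<bar>f (i-1,t-1) * f (j-1,t-1)\<bar> powr r" for f :: "nat \<times> nat \<Rightarrow> real"
      have Fm: "F \<in> borel_measurable (Pi\<^sub>M UNIV (\<lambda>_::nat\<times>nat. (borel :: real measure)))"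
        unfolding F_def using ev by measurable
      have Gm: "G \<in> borel_measurable (Pi\<^sub>M UNIV (\<lambda>_::nat\<times>nat. (borel :: real measure)))"
        unfolding G_def using ev by measurable
      have Fz: "(\<lambda>\<omega>. F (fieldmap Z \<omega>)) = (\<lambda>\<omega>. \<bar>Z i t \<omega>\<bar> powr r * \<bar>Z j t \<omega>\<bar> powr r)"
        unfolding F_def using fm ij t by simp
      have Gs: "(\<lambda>\<omega>. G (fieldmap \<sigma> \<omega>)) = (\<lambda>\<omega>. \<bar>\<sigma> i t \<omega> * \<sigma> j t \<omega>\<bar> powr r)"
        unfolding G_def using fm ij t by simp
      have iv: "indep_var borel (\<lambda>\<omega>. \<bar>Z i t \<omega>\<bar> powr r * \<bar>Z j t \<omega>\<bar> powr r) borel (\<lambda>\<omega>. \<bar>\<sigma> i t \<omega> * \<sigma> j t \<omega>\<bar> powr r)"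
        using FI[OF Fm Gm] unfolding Fz Gs .
      have ivZ: "indep_var borel (\<lambda>\<omega>. \<bar>Z i t \<omega>\<bar> powr r) borel (\<lambda>\<omega>. \<bar>Z j t \<omega>\<bar> powr r)"
        using indep_var_compose[OF indZ2[OF ij(1,2) t ij(3)] absm absm] by (simp add: comp_def)
      have mi: "integrable M (\<lambda>\<omega>. \<bar>Z i t \<omega>\<bar> powr r)" "(\<integral>\<omega>. \<bar>Z i t \<omega>\<bar> powr r \<partial>M) = C0"
        using momZ[OF r(1) r(3) ij(1) t] unfolding C0_def by auto
      have mj: "integrable M (\<lambda>\<omega>. \<bar>Z j t \<omega>\<bar> powr r)" "(\<integral>\<omega>. \<bar>Z j t \<omega>\<bar> powr r \<partial>M) = C0"
        using momZ[OF r(1) r(3) ij(2) t] unfolding C0_def by auto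
      have FZi: "integrable M (\<lambda>\<omega>. \<bar>Z i t \<omega>\<bar> powr r * \<bar>Z j t \<omega>\<bar> powr r)"
        by (rule indep_var_integrable[OF ivZ mi(1) mj(1)])
      have FZe: "(\<integral>\<omega>. \<bar>Z i t \<omega>\<bar> powr r * \<bar>Z j t \<omega>\<bar> powr r \<partial>M) = C0 * C0"
        using indep_var_lebesgue_integral[OF ivZ mi(1) mj(1)] mi(2) mj(2) by simp
      have si: "integrable M (\<lambda>\<omega>. \<bar>\<sigma> i t \<omega>\<bar> powr (2*r))" "(\<integral>\<omega>. \<bar>\<sigma> i t \<omega>\<bar> powr (2*r) \<partial>M) = D"
        using mom\<sigma>[of "2*r" i t] r ij t unfolding D_def by auto
      have sj: "integrable M (\<lambda>\<omega>. \<bar>\<sigma> j t \<omega>\<bar> powr (2*r))" "(\<integral>\<omega>. \<bar>\<sigma> j t \<omega>\<bar> powr (2*r) \<partial>M) = D"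
        using mom\<sigma>[of "2*r" j t] r ij t unfolding D_def by auto
      have pw: "\<bar>x * y\<bar> powr r \<le> (\<bar>x\<bar> powr (2*r) + \<bar>y\<bar> powr (2*r)) / 2" for x y :: real
      proof -
        have "\<bar>x * y\<bar> powr r = \<bar>x\<bar> powr r * \<bar>y\<bar> powr r" by (simp add: abs_mult powr_mult)
        moreover have "\<bar>z\<bar> powr (2*r) = (\<bar>z\<bar> powr r)\<^sup>2" for z :: real
        proof -
          have "\<bar>z\<bar> powr (2*r) = \<bar>z\<bar> powr (r + r)" by (rule arg_cong[where f="\<lambda>e. \<bar>z\<bar> powr e"]) simp
          also have "\<dots> = \<bar>z\<bar> powr r * \<bar>z\<bar> powr r" by (rule powr_add)
          finally show ?thesis by (simp only: power2_eq_square)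
        qed
        moreover have "2 * (\<bar>x\<bar> powr r) * (\<bar>y\<bar> powr r) \<le> (\<bar>x\<bar> powr r)\<^sup>2 + (\<bar>y\<bar> powr r)\<^sup>2"
          by (rule sum_squares_bound)
        ultimately show ?thesis by simp
      qed
      have GSi: "integrable M (\<lambda>\<omega>. \<bar>\<sigma> i t \<omega> * \<sigma> j t \<omega>\<bar> powr r)"
      proof (rule Bochner_Integration.integrable_bound[where f="\<lambda>\<omega>. (\<bar>\<sigma> i t \<omega>\<bar> powr (2*r) + \<bar>\<sigma> j t \<omega>\<bar> powr (2*r)) / 2"])
        show "integrable M (\<lambda>\<omega>. (\<bar>\<sigma> i t \<omega>\<bar> powr (2*r) + \<bar>\<sigma> j t \<omega>\<bar> powr (2*r)) / 2)"
          using si(1) sj(1) by auto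
        show "(\<lambda>\<omega>. \<bar>\<sigma> i t \<omega> * \<sigma> j t \<omega>\<bar> powr r) \<in> borel_measurable M" using ij t by measurable
        show "AE x in M. norm (\<bar>\<sigma> i t x * \<sigma> j t x\<bar> powr r) \<le> norm ((\<bar>\<sigma> i t x\<bar> powr (2*r) + \<bar>\<sigma> j t x\<bar> powr (2*r)) / 2)"
          using pw by (auto intro!: AE_I2)
      qed
      have GSe: "(\<integral>\<omega>. \<bar>\<sigma> i t \<omega> * \<sigma> j t \<omega>\<bar> powr r \<partial>M) \<le> D"
      proof -
        have "(\<integral>\<omega>. \<bar>\<sigma> i t \<omega> * \<sigma> j t \<omega>\<bar> powr r \<partial>M) \<le> (\<integral>\<omega>. (\<bar>\<sigma> i t \<omega>\<bar> powr (2*r) + \<bar>\<sigma> j t \<omega>\<bar> powr (2*r)) / 2 \<partial>M)"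
          using GSi si(1) sj(1) pw by (intro integral_mono) auto
        also have "\<dots> = D" using si sj by simp
        finally show ?thesis .
      qed
      have eqY: "(\<lambda>\<omega>. \<bar>X i t \<omega> * X j t \<omega>\<bar> powr r) = (\<lambda>\<omega>. (\<bar>Z i t \<omega>\<bar> powr r * \<bar>Z j t \<omega>\<bar> powr r) * \<bar>\<sigma> i t \<omega> * \<sigma> j t \<omega>\<bar> powr r)"
        unfolding Xeq by (simp add: abs_mult powr_mult ac_simps)
      have "(\<integral>\<omega>. \<bar>X i t \<omega> * X j t \<omega>\<bar> powr r \<partial>M) = (C0 * C0) * (\<integral>\<omega>. \<bar>\<sigma> i t \<omega> * \<sigma> j t \<omega>\<bar> powr r \<partial>M)"
        unfolding eqY using indep_var_lebesgue_integral[OF iv FZi GSi] FZe by simp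
      also have "\<dots> \<le> (C0 * C0) * D" using GSe C0 by (intro mult_left_mono) auto
      finally show ?thesis unfolding eqY using indep_var_integrable[OF iv FZi GSi] by (simp add: ac_simps)
    qed
    have bnd: "measure M {\<omega>\<in>space M. \<bar>\<Sum>t=1..n. X i t \<omega> * X j t \<omega>\<bar> > b} \<le> (D * (C0 * C0)) * real n / b powr r"
      if b: "b > 0" for n b
    proof -
      have "measure M {\<omega>\<in>space M. \<bar>\<Sum>t\<in>{1..n}. X i t \<omega> * X j t \<omega>\<bar> > b} \<le> real (card {1..n}) * (D * (C0 * C0)) / b powr r"
        by (rule sub_bound[where Y="\<lambda>t \<omega>. X i t \<omega> * X j t \<omega>"]) (use ij b r Yb in \<open>auto intro: Xm\<close>)
      then show ?thesis by (simp add: ac_simps)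
    qed
    show ?thesis
      by (rule conv_from_bound[OF _ r(1) top zz[OF r(4)] e]) (rule bnd)
  next
    case False
    then have \<alpha>2: "\<alpha> > 2" using \<alpha> by auto
    have sqp: "x\<^sup>2 = \<bar>x\<bar> powr 2" for x :: real
      by (cases "x = 0") (auto simp: powr_numeral)
    have qp: "x\<^sup>2 * x\<^sup>2 = \<bar>x\<bar> powr 4" for x :: real
    proof -
      have "\<bar>x\<bar> powr 4 = \<bar>x\<bar> powr (2 + 2)" by simp
      also have "\<dots> = \<bar>x\<bar> powr 2 * \<bar>x\<bar> powr 2" by (rule powr_add)
      finally show ?thesis by (simp only: sqp)
    qed
    define Z2 where "Z2 = (\<integral>\<omega>. \<bar>Z 1 1 \<omega>\<bar> powr 2 \<partial>M)"
    define E4 where "E4 = (\<integral>\<omega>. \<bar>\<sigma> 1 1 \<omega>\<bar> powr 4 \<partial>M)"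
    have Z2: "Z2 \<ge> 0" unfolding Z2_def by (intro integral_nonneg_AE) auto
    have sqm: "(\<lambda>x::real. x\<^sup>2) \<in> borel_measurable borel" by measurable
    have int1: "integrable M (Z 1 1)"
    proof -
      have "integrable M (\<lambda>\<omega>. \<bar>Z 1 1 \<omega>\<bar> powr 1)" by (rule rv_moment[OF P rv]) (use \<alpha>2 in auto)
      then have "integrable M (\<lambda>\<omega>. \<bar>Z 1 1 \<omega>\<bar>)" by simp
      then show ?thesis by (simp add: integrable_abs_iff)
    qed
    have idm: "(\<lambda>x::real. x) \<in> borel_measurable borel" by simp
    have Zint: "integrable M (Z k t) \<and> (\<integral>\<omega>. Z k t \<omega> \<partial>M) = 0" if "k \<ge> 1" "t \<ge> 1" for k t
      using distr_transfer[OF dZ[OF that] Zm[OF that] Z11 idm] int1 meanZ by simp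
    have Zsq: "integrable M (\<lambda>\<omega>. (Z k t \<omega>)\<^sup>2) \<and> (\<integral>\<omega>. (Z k t \<omega>)\<^sup>2 \<partial>M) = Z2" if "k \<ge> 1" "t \<ge> 1" for k t
      using momZ[of 2 k t] \<alpha>2 that unfolding Z2_def sqp[symmetric] by auto
    have s4: "integrable M (\<lambda>\<omega>. \<bar>\<sigma> k t \<omega>\<bar> powr 4) \<and> (\<integral>\<omega>. \<bar>\<sigma> k t \<omega>\<bar> powr 4 \<partial>M) = E4" if "k \<ge> 1" "t \<ge> 1" for k t
      using mom\<sigma>[of 4 k t] Q4 that unfolding E4_def by auto
    have pw2: "(x * y)\<^sup>2 \<le> (\<bar>x\<bar> powr 4 + \<bar>y\<bar> powr 4) / 2" for x y :: real
    proof -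
      have "2 * x\<^sup>2 * y\<^sup>2 \<le> (x\<^sup>2)\<^sup>2 + (y\<^sup>2)\<^sup>2" by (rule sum_squares_bound)
      moreover have "(x\<^sup>2)\<^sup>2 = \<bar>x\<bar> powr 4" "(y\<^sup>2)\<^sup>2 = \<bar>y\<bar> powr 4"
        using qp[of x] qp[of y] by (simp_all add: power2_eq_square)
      ultimately show ?thesis by (simp add: power_mult_distrib)
    qed
    have S2: "integrable M (\<lambda>\<omega>. (\<sigma> i t \<omega> * \<sigma> j t \<omega>)\<^sup>2) \<and> (\<integral>\<omega>. (\<sigma> i t \<omega> * \<sigma> j t \<omega>)\<^sup>2 \<partial>M) \<le> E4"
      if t: "t \<ge> 1" for t
    proof -
      have si: "integrable M (\<lambda>\<omega>. \<bar>\<sigma> i t \<omega>\<bar> powr 4)" "(\<integral>\<omega>. \<bar>\<sigma> i t \<omega>\<bar> powr 4 \<partial>M) = E4"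
        using s4[OF ij(1) t] by auto
      have sj: "integrable M (\<lambda>\<omega>. \<bar>\<sigma> j t \<omega>\<bar> powr 4)" "(\<integral>\<omega>. \<bar>\<sigma> j t \<omega>\<bar> powr 4 \<partial>M) = E4"
        using s4[OF ij(2) t] by auto
      have ii: "integrable M (\<lambda>\<omega>. (\<sigma> i t \<omega> * \<sigma> j t \<omega>)\<^sup>2)"
      proof (rule Bochner_Integration.integrable_bound[where f="\<lambda>\<omega>. (\<bar>\<sigma> i t \<omega>\<bar> powr 4 + \<bar>\<sigma> j t \<omega>\<bar> powr 4) / 2"])
        show "integrable M (\<lambda>\<omega>. (\<bar>\<sigma> i t \<omega>\<bar> powr 4 + \<bar>\<sigma> j t \<omega>\<bar> powr 4) / 2)" using si(1) sj(1) by auto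
        show "(\<lambda>\<omega>. (\<sigma> i t \<omega> * \<sigma> j t \<omega>)\<^sup>2) \<in> borel_measurable M" using ij t by measurable
        show "AE x in M. norm ((\<sigma> i t x * \<sigma> j t x)\<^sup>2) \<le> norm ((\<bar>\<sigma> i t x\<bar> powr 4 + \<bar>\<sigma> j t x\<bar> powr 4) / 2)"
          using pw2 by (auto intro!: AE_I2)
      qed
      have "(\<integral>\<omega>. (\<sigma> i t \<omega> * \<sigma> j t \<omega>)\<^sup>2 \<partial>M) \<le> (\<integral>\<omega>. (\<bar>\<sigma> i t \<omega>\<bar> powr 4 + \<bar>\<sigma> j t \<omega>\<bar> powr 4) / 2 \<partial>M)"
        using ii si(1) sj(1) pw2 by (intro integral_mono) auto
      also have "\<dots> = E4" using si sj by simp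
      finally show ?thesis using ii by simp
    qed
    have Ysq: "integrable M (\<lambda>\<omega>. (X i t \<omega> * X j t \<omega>)\<^sup>2) \<and> (\<integral>\<omega>. (X i t \<omega> * X j t \<omega>)\<^sup>2 \<partial>M) \<le> E4 * (Z2 * Z2)"
      if t: "t \<ge> 1" for t
    proof -
      define F where "F f = (f (i-1,t-1))\<^sup>2 * (f (j-1,t-1))\<^sup>2" for f :: "nat \<times> nat \<Rightarrow> real"
      define G where "G f = (f (i-1,t-1) * f (j-1,t-1))\<^sup>2" for f :: "nat \<times> nat \<Rightarrow> real"
      have Fm: "F \<in> borel_measurable (Pi\<^sub>M UNIV (\<lambda>_::nat\<times>nat. (borel :: real measure)))"
        unfolding F_def using ev by measurable
      have Gm: "G \<in> borel_measurable (Pi\<^sub>M UNIV (\<lambda>_::nat\<times>nat. (borel :: real measure)))"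
        unfolding G_def using ev by measurable
      have Fz: "(\<lambda>\<omega>. F (fieldmap Z \<omega>)) = (\<lambda>\<omega>. (Z i t \<omega>)\<^sup>2 * (Z j t \<omega>)\<^sup>2)"
        unfolding F_def using fm ij t by simp
      have Gs: "(\<lambda>\<omega>. G (fieldmap \<sigma> \<omega>)) = (\<lambda>\<omega>. (\<sigma> i t \<omega> * \<sigma> j t \<omega>)\<^sup>2)"
        unfolding G_def using fm ij t by simp
      have iv: "indep_var borel (\<lambda>\<omega>. (Z i t \<omega>)\<^sup>2 * (Z j t \<omega>)\<^sup>2) borel (\<lambda>\<omega>. (\<sigma> i t \<omega> * \<sigma> j t \<omega>)\<^sup>2)"
        using FI[OF Fm Gm] unfolding Fz Gs .
      have ivZ: "indep_var borel (\<lambda>\<omega>. (Z i t \<omega>)\<^sup>2) borel (\<lambda>\<omega>. (Z j t \<omega>)\<^sup>2)"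
        using indep_var_compose[OF indZ2[OF ij(1,2) t ij(3)] sqm sqm] by (simp add: comp_def)
      have FZi: "integrable M (\<lambda>\<omega>. (Z i t \<omega>)\<^sup>2 * (Z j t \<omega>)\<^sup>2)"
        using indep_var_integrable[OF ivZ] Zsq[OF ij(1) t] Zsq[OF ij(2) t] by auto
      have FZe: "(\<integral>\<omega>. (Z i t \<omega>)\<^sup>2 * (Z j t \<omega>)\<^sup>2 \<partial>M) = Z2 * Z2"
        using indep_var_lebesgue_integral[OF ivZ] Zsq[OF ij(1) t] Zsq[OF ij(2) t] by auto
      have eqY: "(\<lambda>\<omega>. (X i t \<omega> * X j t \<omega>)\<^sup>2) = (\<lambda>\<omega>. ((Z i t \<omega>)\<^sup>2 * (Z j t \<omega>)\<^sup>2) * (\<sigma> i t \<omega> * \<sigma> j t \<omega>)\<^sup>2)"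
        unfolding Xeq by (simp add: power_mult_distrib ac_simps)
      have "(\<integral>\<omega>. (X i t \<omega> * X j t \<omega>)\<^sup>2 \<partial>M) = (Z2 * Z2) * (\<integral>\<omega>. (\<sigma> i t \<omega> * \<sigma> j t \<omega>)\<^sup>2 \<partial>M)"
        unfolding eqY using indep_var_lebesgue_integral[OF iv FZi] S2[OF t] FZe by simp
      also have "\<dots> \<le> (Z2 * Z2) * E4" using S2[OF t] Z2 by (intro mult_left_mono) auto
      finally show ?thesis unfolding eqY using indep_var_integrable[OF iv FZi] S2[OF t] by (simp add: ac_simps)
    qed
    have Yorth: "(\<integral>\<omega>. (X i t \<omega> * X j t \<omega>) * (X i s \<omega> * X j s \<omega>) \<partial>M) = 0"
      if ts: "t \<ge> 1" "s \<ge> 1" "t \<noteq> s" for t s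
    proof -
      define F where "F f = (f (i-1,t-1) * f (j-1,t-1)) * (f (i-1,s-1) * f (j-1,s-1))" for f :: "nat \<times> nat \<Rightarrow> real"
      have Fm: "F \<in> borel_measurable (Pi\<^sub>M UNIV (\<lambda>_::nat\<times>nat. (borel :: real measure)))"
        unfolding F_def using ev by measurable
      have Fz: "(\<lambda>\<omega>. F (fieldmap Z \<omega>)) = (\<lambda>\<omega>. (Z i t \<omega> * Z j t \<omega>) * (Z i s \<omega> * Z j s \<omega>))"
        unfolding F_def using fm ij ts by simp
      have Gs: "(\<lambda>\<omega>. F (fieldmap \<sigma> \<omega>)) = (\<lambda>\<omega>. (\<sigma> i t \<omega> * \<sigma> j t \<omega>) * (\<sigma> i s \<omega> * \<sigma> j s \<omega>))"
        unfolding F_def using fm ij ts by simp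
      have iv: "indep_var borel (\<lambda>\<omega>. (Z i t \<omega> * Z j t \<omega>) * (Z i s \<omega> * Z j s \<omega>)) borel (\<lambda>\<omega>. (\<sigma> i t \<omega> * \<sigma> j t \<omega>) * (\<sigma> i s \<omega> * \<sigma> j s \<omega>))"
        using FI[OF Fm Fm] unfolding Fz Gs .
      have ivP: "indep_var borel (\<lambda>\<omega>. Z i t \<omega> * Z j t \<omega>) borel (\<lambda>\<omega>. Z i s \<omega> * Z j s \<omega>)"
        using indep_vars_pairs[OF indZ, of "(i,t)" "(j,t)" "(i,s)" "(j,s)"] ij ts unfolding pos_idx_def by auto
      have Pt: "integrable M (\<lambda>\<omega>. Z i t \<omega> * Z j t \<omega>) \<and> (\<integral>\<omega>. Z i t \<omega> * Z j t \<omega> \<partial>M) = 0" if "t \<ge> 1" for t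
        using indep_var_integrable[OF indZ2[OF ij(1,2) that ij(3)]] indep_var_lebesgue_integral[OF indZ2[OF ij(1,2) that ij(3)]]
          Zint[OF ij(1) that] Zint[OF ij(2) that] by auto
      have FZi: "integrable M (\<lambda>\<omega>. (Z i t \<omega> * Z j t \<omega>) * (Z i s \<omega> * Z j s \<omega>))"
        using indep_var_integrable[OF ivP] Pt[OF ts(1)] Pt[OF ts(2)] by auto
      have FZe: "(\<integral>\<omega>. (Z i t \<omega> * Z j t \<omega>) * (Z i s \<omega> * Z j s \<omega>) \<partial>M) = 0"
        using indep_var_lebesgue_integral[OF ivP] Pt[OF ts(1)] Pt[OF ts(2)] by auto
      have GSi: "integrable M (\<lambda>\<omega>. (\<sigma> i t \<omega> * \<sigma> j t \<omega>) * (\<sigma> i s \<omega> * \<sigma> j s \<omega>))"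
      proof (rule Bochner_Integration.integrable_bound[where f="\<lambda>\<omega>. (\<sigma> i t \<omega> * \<sigma> j t \<omega>)\<^sup>2 + (\<sigma> i s \<omega> * \<sigma> j s \<omega>)\<^sup>2"])
        show "integrable M (\<lambda>\<omega>. (\<sigma> i t \<omega> * \<sigma> j t \<omega>)\<^sup>2 + (\<sigma> i s \<omega> * \<sigma> j s \<omega>)\<^sup>2)"
          using S2[OF ts(1)] S2[OF ts(2)] by auto
        show "(\<lambda>\<omega>. (\<sigma> i t \<omega> * \<sigma> j t \<omega>) * (\<sigma> i s \<omega> * \<sigma> j s \<omega>)) \<in> borel_measurable M" using ij ts by measurable
        show "AE x in M. norm ((\<sigma> i t x * \<sigma> j t x) * (\<sigma> i s x * \<sigma> j s x)) \<le> norm ((\<sigma> i t x * \<sigma> j t x)\<^sup>2 + (\<sigma> i s x * \<sigma> j s x)\<^sup>2)"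
        proof (intro AE_I2)
          fix x
          define u where "u = \<sigma> i t x * \<sigma> j t x"
          define v where "v = \<sigma> i s x * \<sigma> j s x"
          have h: "2 * (\<bar>u\<bar> * \<bar>v\<bar>) \<le> u\<^sup>2 + v\<^sup>2"
            using sum_squares_bound[of "\<bar>u\<bar>" "\<bar>v\<bar>"] by (simp add: mult.assoc)
          have h0: "0 \<le> \<bar>u\<bar> * \<bar>v\<bar>" by simp
          have h1: "0 \<le> u\<^sup>2 + v\<^sup>2" by simp
          have "\<bar>u\<bar> * \<bar>v\<bar> \<le> u\<^sup>2 + v\<^sup>2" using h h0 by linarith
          then have "\<bar>u * v\<bar> \<le> \<bar>u\<^sup>2 + v\<^sup>2\<bar>" using h1 by (simp add: abs_mult)
          then show "norm ((\<sigma> i t x * \<sigma> j t x) * (\<sigma> i s x * \<sigma> j s x)) \<le> norm ((\<sigma> i t x * \<sigma> j t x)\<^sup>2 + (\<sigma> i s x * \<sigma> j s x)\<^sup>2)"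
            unfolding u_def v_def by simp
        qed
      qed
      have eqY: "(\<lambda>\<omega>. (X i t \<omega> * X j t \<omega>) * (X i s \<omega> * X j s \<omega>)) =
          (\<lambda>\<omega>. ((Z i t \<omega> * Z j t \<omega>) * (Z i s \<omega> * Z j s \<omega>)) * ((\<sigma> i t \<omega> * \<sigma> j t \<omega>) * (\<sigma> i s \<omega> * \<sigma> j s \<omega>)))"
        unfolding Xeq by (simp add: ac_simps)
      show ?thesis unfolding eqY using indep_var_lebesgue_integral[OF iv FZi GSi] FZe by simp
    qed
    have bnd: "measure M {\<omega>\<in>space M. \<bar>\<Sum>t=1..n. X i t \<omega> * X j t \<omega>\<bar> > b} \<le> (E4 * (Z2 * Z2)) * real n / b powr 2"
      if b: "b > 0" for n b
    proof -
      have "measure M {\<omega>\<in>space M. \<bar>\<Sum>t\<in>{1..n}. X i t \<omega> * X j t \<omega>\<bar> > b} \<le> real (card {1..n}) * (E4 * (Z2 * Z2)) / b\<^sup>2"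
        by (rule sm_bound[where Y="\<lambda>t \<omega>. X i t \<omega> * X j t \<omega>"]) (use ij b Ysq Yorth in \<open>auto intro: Xm\<close>)
      moreover have "b\<^sup>2 = b powr 2" using b by (simp add: powr_numeral)
      ultimately show ?thesis by (simp add: ac_simps)
    qed
    show ?thesis
      by (rule conv_from_bound[OF _ _ top zz[of 2] e]) (rule bnd, use \<alpha> in auto)
  qed
qed



theorem theorem3p6:
  fixes M :: "'a measure" and p :: nat
    and X :: "nat \<Rightarrow> nat \<Rightarrow> 'a \<Rightarrow> real" and a :: "nat \<Rightarrow> real"
  assumes "prob_space M"
    and "p \<ge> 1"
    and "iid_model M X \<or> sv_model M p X"
    and "(\<lambda>n. real n * measure M {\<omega> \<in> space M. \<bar>X 1 1 \<omega>\<bar> > a n}) \<longlonglongrightarrow> 1"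
  shows "tendsto_in_prob_zero M
           (\<lambda>n \<omega>. spectral_norm p
                    (\<lambda>i j. if i = j then 0 else (\<Sum>t=1..n. X i t \<omega> * X j t \<omega>)) / (a n)\<^sup>2)"
  using assms(3)
proof
  assume iid: "iid_model M X"
  show ?thesis
  proof (rule assembly[OF assms(1) assms(2) iid_top[OF assms(1) iid assms(4)]])
    fix i j n assume "i \<in> {1..p}" "j \<in> {1..p}" "i \<noteq> j"
    then show "(\<lambda>\<omega>. \<Sum>t=1..n. X i t \<omega> * X j t \<omega>) \<in> borel_measurable M"
      by (intro iid_meas[OF assms(1) iid assms(4)]) auto
  next
    fix i j and \<epsilon> :: real assume "i \<in> {1..p}" "j \<in> {1..p}" "i \<noteq> j" "\<epsilon> > 0"
    then show "(\<lambda>n. measure M {\<omega>\<in>space M. \<bar>\<Sum>t=1..n. X i t \<omega> * X j t \<omega>\<bar> > \<epsilon> * (a n)\<^sup>2}) \<longlonglongrightarrow> 0"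
      by (intro iid_conv[OF assms(1) iid assms(4)]) auto
  qed
next
  assume sv: "sv_model M p X"
  show ?thesis
  proof (rule assembly[OF assms(1) assms(2) sv_top[OF assms(1) sv assms(4)]])
    fix i j n assume "i \<in> {1..p}" "j \<in> {1..p}" "i \<noteq> j"
    then show "(\<lambda>\<omega>. \<Sum>t=1..n. X i t \<omega> * X j t \<omega>) \<in> borel_measurable M"
      by (intro sv_meas[OF assms(1) sv assms(4)]) auto
  next
    fix i j and \<epsilon> :: real assume "i \<in> {1..p}" "j \<in> {1..p}" "i \<noteq> j" "\<epsilon> > 0"
    then show "(\<lambda>n. measure M {\<omega>\<in>space M. \<bar>\<Sum>t=1..n. X i t \<omega> * X j t \<omega>\<bar> > \<epsilon> * (a n)\<^sup>2}) \<longlonglongrightarrow> 0"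
      by (intro sv_conv[OF assms(1) sv assms(4)]) auto
  qed
qed

end
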